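(* Let $d\ge1$, $s_1\ge0$, $s_2\le0$, $\alpha>0$, $\beta>0$, and $g\in L^2(\mathbb{T}^d;\mathbb{C})$; set $\tilde g=g-\frac{1}{|\mathbb{T}^d|}\int_{\mathbb{T}^d}g\,dx$. Consider $$I(u,v)=\frac12\|(-\Delta)^{s_1/2}u\|^2+\frac\alpha2\|u+v-g\|^2+\frac\beta2\|R_{s_2/2}(v)\|^2$$ for $u\in H^{s_1}_0(\mathbb{T}^d;\mathbb{C})$, $v\in\dot H^{s_2}(\mathbb{T}^d;\mathbb{C})\cap L^2_0(\mathbb{T}^d;\mathbb{C})$. Then there exist $\tilde u\in H^{s_1}_0(\mathbb{T}^d;\mathbb{C})$ and $v\in\dot H^{s_2}(\mathbb{T}^d;\mathbb{C})\cap L^2_0(\mathbb{T}^d;\mathbb{C})$ such that $(\tilde u,v)$ minimizes $I$. Moreover, $u:=\tilde u+\frac{1}{|\mathbb{T}^d|}\int_{\mathbb{T}^d}g\,dx$ and $v$ satisfy $$\int_{\mathbb{T}^d}(u(x)-g(x))\,dx=\int_{\mathbb{T}^d}v(x)\,dx=0,$$ and the solution pair $(u,v)$ is unique.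
   Context: $\mathbb{T}^d=\mathbb{R}^d/(2\pi\mathbb{Z})^d$, $\|\cdot\|$ is the $L^2(\mathbb{T}^d;\mathbb{C})$ norm, $L^2_0$ the zero-mean subspace. $\hat u_k=\int_{\mathbb{T}^d}u\,e^{-ik\cdot x}dx$. Fractional Laplacian: $(-\Delta)^\sigma u=(2\pi)^{-d}\sum_{k}|k|^{2\sigma}\hat u_ke^{ik\cdot x}$; Riesz potential for $\sigma\le0$: $R_\sigma(u)=(2\pi)^{-d}\sum_{k\ne0}|k|^{2\sigma}\hat u_ke^{ik\cdot x}$. For $\sigma\ge0$, $H^\sigma_0=\{u\in L^2_0:\sum_{k\ne0}|k|^{2\sigma}|\hat u_k|^2<\infty\}$; for $\sigma<0$, $\dot H^\sigma$ is the completion of $L^2_0$ with respect to the norm $(\sum_{k\ne0}|k|^{2\sigma}|\hat u_k|^2)^{1/2}$. *)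

theory Defs
  imports "HOL-Analysis.Analysis"
begin

text \<open>The torus T^d = R^d/(2 pi Z)^d is represented by the fundamental cube
  [0, 2 pi]^d with Lebesgue measure; functions on T^d are functions on this cube.
  The dimension d is the cardinality of the finite index type 'd (so d >= 1).\<close>

definition torus :: "(real^'d) set" where
  "torus = cbox 0 (\<chi> i. 2 * pi)"

abbreviation torus_measure :: "(real^'d) measure" where
  "torus_measure \<equiv> lebesgue_on torus"

definition L2 :: "(real^'d \<Rightarrow> complex) \<Rightarrow> bool" where
  "L2 u \<longleftrightarrow> u \<in> borel_measurable torus_measure \<and>
     integrable torus_measure (\<lambda>x. (cmod (u x))\<^sup>2)"

definition L2norm2 :: "(real^'d \<Rightarrow> complex) \<Rightarrow> real" where
  "L2norm2 u = (LINT x|torus_measure. (cmod (u x))\<^sup>2)"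

definition lat :: "int^'d \<Rightarrow> real^'d" where
  "lat k = (\<chi> i. of_int (k $ i))"

definition fourier :: "(real^'d \<Rightarrow> complex) \<Rightarrow> int^'d \<Rightarrow> complex" where
  "fourier u k = (LINT x|torus_measure. u x * exp (- \<i> * of_real (lat k \<bullet> x)))"

definition tint :: "(real^'d \<Rightarrow> complex) \<Rightarrow> complex" where
  "tint u = (LINT x|torus_measure. u x)"

definition tvol :: "'d itself \<Rightarrow> real" where
  "tvol _ = (2 * pi) ^ CARD('d)"

definition L2_0 :: "(real^'d \<Rightarrow> complex) set" where
  "L2_0 = {u. L2 u \<and> fourier u 0 = 0}"

text \<open>Weighted coefficient sums sum_{k ~= 0} |k|^{2 sigma} |u_k|^2.
  For sigma >= 0, H0 sigma is H^sigma_0; for sigma < 0, H0 sigma is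
  dot-H^sigma intersected with L^2_0 (elements of L^2_0 whose dot-H^sigma norm is finite).\<close>
definition H0 :: "real \<Rightarrow> (real^'d \<Rightarrow> complex) set" where
  "H0 \<sigma> = {u \<in> L2_0. (\<lambda>k. norm (lat k) powr (2 * \<sigma>) * (cmod (fourier u k))\<^sup>2)
                       summable_on (UNIV - {0})}"

text \<open>Multiplier |k|^{2 sigma} of the fractional Laplacian (with |0|^0 = 1).\<close>
definition lap_mult :: "real \<Rightarrow> int^'d \<Rightarrow> real" where
  "lap_mult \<sigma> k = (if k = 0 then (if \<sigma> = 0 then 1 else 0) else norm (lat k) powr (2 * \<sigma>))"

text \<open>(-Delta)^sigma u: the L^2 function whose Fourier coefficients are |k|^{2 sigma} u_k
  (i.e. the L^2 sum of the defining Fourier series; determined up to a.e. equality).\<close>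
definition frac_lap :: "real \<Rightarrow> (real^'d \<Rightarrow> complex) \<Rightarrow> (real^'d \<Rightarrow> complex)" where
  "frac_lap \<sigma> u = (SOME w. L2 w \<and> (\<forall>k. fourier w k = of_real (lap_mult \<sigma> k) * fourier u k))"

definition riesz :: "real \<Rightarrow> (real^'d \<Rightarrow> complex) \<Rightarrow> (real^'d \<Rightarrow> complex)" where
  "riesz \<sigma> u = (SOME w. L2 w \<and> (\<forall>k. fourier w k =
       (if k = 0 then 0 else of_real (norm (lat k) powr (2 * \<sigma>)) * fourier u k)))"

definition energy :: "real \<Rightarrow> real \<Rightarrow> real \<Rightarrow> real \<Rightarrow> (real^'d \<Rightarrow> complex)
     \<Rightarrow> (real^'d \<Rightarrow> complex) \<Rightarrow> (real^'d \<Rightarrow> complex) \<Rightarrow> real" where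
  "energy s1 s2 \<alpha> \<beta> g u v =
     1/2 * L2norm2 (frac_lap (s1/2) u)
     + \<alpha>/2 * L2norm2 (\<lambda>x. u x + v x - g x)
     + \<beta>/2 * L2norm2 (riesz (s2/2) v)"

end

theory Submission
  imports Defs
begin


definition ek :: "int^'d \<Rightarrow> real^'d \<Rightarrow> complex" where
  "ek k x = exp (\<i> * complex_of_real (lat k \<bullet> x))"

lemma torus_facts[simp]:
  "torus \<in> sets lebesgue" "torus \<in> sets borel" "torus \<in> lmeasurable" "compact torus"
  unfolding torus_def by auto

lemma space_torus[simp]: "space (torus_measure :: (real^'d) measure) = torus"
  by (simp add: space_restrict_space)

lemma finite_torus: "finite_measure (torus_measure :: (real^'d) measure)"
  by (simp add: finite_measure_lebesgue_on)

lemma measure_torus: "measure (torus_measure :: (real^'d) measure) torus = tvol TYPE('d)"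
proof -
  have "measure (torus_measure :: (real^'d) measure) torus = measure lborel (torus :: (real^'d) set)"
    by (simp add: measure_restrict_space)
  also have "\<dots> = (\<Prod>b\<in>(Basis::(real^'d) set). 2*pi)"
  proof -
    have *: "b \<in> Basis \<Longrightarrow> (\<chi> i. 2 * pi) \<bullet> (b::real^'d) = 2 * pi" for b
      by (auto simp: Basis_vec_def cart_eq_inner_axis[symmetric])
    show ?thesis unfolding torus_def measure_lborel_cbox_eq
      using * by (auto intro!: prod.cong)
  qed
  also have "\<dots> = (2*pi) ^ CARD('d)"
    by (simp add: power_mult_distrib)
  finally show ?thesis by (simp add: tvol_def)
qed

lemma tvol_pos: "tvol TYPE('d::finite) > 0"
  by (simp add: tvol_def)

lemma ek_cont: "continuous_on A (ek k)"
  unfolding ek_def by (intro continuous_intros)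

lemma norm_ek[simp]: "norm (ek k x) = 1"
  unfolding ek_def by (simp add: norm_exp_i_times)

lemma lat_neg: "lat (-k) = - lat k"
  unfolding lat_def by (simp add: vec_eq_iff)
lemma lat_add: "lat (k + j) = lat k + lat j"
  unfolding lat_def by (simp add: vec_eq_iff)
lemma lat_zero[simp]: "lat 0 = 0"
  unfolding lat_def by (simp add: vec_eq_iff)
lemma lat_eq_0[simp]: "lat k = 0 \<longleftrightarrow> k = 0"
  unfolding lat_def by (simp add: vec_eq_iff)

lemma cnj_exp_it: "cnj (exp (\<i> * complex_of_real t)) = exp (-(\<i> * complex_of_real t))"
  by (simp add: exp_cnj)

lemma cnj_ek: "cnj (ek k x) = ek (-k) x"
  unfolding ek_def by (simp add: cnj_exp_it lat_neg)

lemma ek_zero[simp]: "ek 0 x = 1"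
  unfolding ek_def lat_def by (simp add: inner_vec_def)

lemma ek_mult: "ek k x * ek j x = ek (k + j) x"
  unfolding ek_def by (simp add: exp_add[symmetric] lat_add inner_add_left algebra_simps)

lemma fourier_ek: "fourier u k = (LINT x|torus_measure. u x * cnj (ek k x))"
  unfolding fourier_def ek_def by (simp add: cnj_exp_it)

lemma int1d:
  fixes n :: int
  shows "(\<integral>t. indicator {0..2*pi} t *\<^sub>R exp (t *\<^sub>R (\<i> * of_int n)) \<partial>lborel) = (if n = 0 then 2*pi else 0)"
proof -
  let ?A = "\<i> * (of_int n :: complex)"
  have int: "set_integrable lborel {0..2*pi} (\<lambda>t. exp (t *\<^sub>R ?A))"
    unfolding set_integrable_def
    by (rule borel_integrable_compact) (auto intro!: continuous_intros)
  have "(\<integral>t. indicator {0..2*pi} t *\<^sub>R exp (t *\<^sub>R ?A) \<partial>lborel) = integral {0..2*pi} (\<lambda>t. exp (t *\<^sub>R ?A))"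
    using set_borel_integral_eq_integral(2)[OF int] by (simp add: set_lebesgue_integral_def)
  also have "\<dots> = (if n = 0 then 2*pi else 0)"
  proof (cases "n = 0")
    case True then show ?thesis by (simp add: scaleR_conv_of_real)
  next
    case False
    then have A0: "?A \<noteq> 0" by simp
    have "((\<lambda>t. exp (t *\<^sub>R ?A)) has_integral (exp ((2*pi) *\<^sub>R ?A) / ?A - exp (0 *\<^sub>R ?A) / ?A)) {0..2*pi}"
    proof (rule fundamental_theorem_of_calculus)
      fix x assume "x \<in> {0..2*pi}"
      have "((\<lambda>t. exp (t *\<^sub>R ?A) * inverse ?A) has_vector_derivative exp (x *\<^sub>R ?A) * ?A * inverse ?A) (at x within {0..2*pi})"
        by (intro has_vector_derivative_mult_left exp_scaleR_has_vector_derivative_right)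
      moreover have "exp (x *\<^sub>R ?A) * ?A * inverse ?A = exp (x *\<^sub>R ?A)"
        using A0 by (metis mult.assoc right_inverse mult_1_right)
      moreover have "(\<lambda>t. exp (t *\<^sub>R ?A) * inverse ?A) = (\<lambda>t. exp (t *\<^sub>R ?A) / ?A)"
        by (simp add: divide_inverse)
      ultimately show "((\<lambda>t. exp (t *\<^sub>R ?A) / ?A) has_vector_derivative exp (x *\<^sub>R ?A)) (at x within {0..2*pi})"
        by metis
    qed simp
    moreover have "exp ((2*pi) *\<^sub>R ?A) = 1"
    proof -
      have "(2*pi) *\<^sub>R ?A = (2 * of_int n * pi) * \<i>" by (simp add: scaleR_conv_of_real)
      then show ?thesis using exp_integer_2pi[of "of_int n"] by simp
    qed
    ultimately show ?thesis using False by (simp add: integral_unique)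
  qed
  finally show ?thesis .
qed

lemma integral_lborel_prod:
  fixes f :: "'a::euclidean_space \<Rightarrow> real \<Rightarrow> complex"
  assumes int: "\<And>b. b \<in> Basis \<Longrightarrow> integrable lborel (f b)"
  shows "(\<integral>x. (\<Prod>b\<in>Basis. f b (x \<bullet> b)) \<partial>lborel) = (\<Prod>b\<in>Basis. \<integral>t. f b t \<partial>lborel)"
proof -
  interpret product_sigma_finite "\<lambda>_::'a. (lborel::real measure)" by standard
  have meas[measurable]: "b \<in> Basis \<Longrightarrow> f b \<in> borel_measurable borel" for b
    using int[of b] by auto
  have m2: "(\<lambda>x. \<Prod>b\<in>Basis. f b (x \<bullet> b)) \<in> borel_measurable borel"
    by (intro borel_measurable_prod) (auto intro: measurable_compose[OF _ meas])
  have "(\<integral>x. (\<Prod>b\<in>Basis. f b (x \<bullet> b)) \<partial>lborel)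
     = (\<integral>y. (\<Prod>b\<in>Basis. f b ((\<Sum>c\<in>Basis. y c *\<^sub>R c) \<bullet> b)) \<partial>(\<Pi>\<^sub>M b\<in>Basis. lborel))"
    by (subst lborel_eq) (rule integral_distr[OF _ m2], measurable)
  also have "\<dots> = (\<integral>y. (\<Prod>b\<in>Basis. f b (y b)) \<partial>(\<Pi>\<^sub>M b\<in>Basis. lborel))"
  proof (rule Bochner_Integration.integral_cong[OF refl], rule prod.cong[OF refl])
    fix y b assume "b \<in> (Basis::'a set)"
    then have "(\<Sum>c\<in>Basis. y c *\<^sub>R c) \<bullet> b = y b"
      by (simp add: inner_sum_left inner_Basis if_distrib cong: if_cong)
    then show "f b ((\<Sum>c\<in>Basis. y c *\<^sub>R c) \<bullet> b) = f b (y b)" by simp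
  qed
  also have "\<dots> = (\<Prod>b\<in>Basis. \<integral>t. f b t \<partial>lborel)"
    by (rule product_integral_prod) (auto intro: int)
  finally show ?thesis .
qed

lemma Basis_cart_image: "(Basis :: (real^'n) set) = (\<lambda>i. axis i 1) ` UNIV"
  by (auto simp: Basis_vec_def)

lemma inj_axis1: "inj (\<lambda>i::'n::finite. axis i (1::real))"
  by (auto simp: inj_def axis_eq_axis)

lemma integral_lborel_prod_cart:
  fixes f :: "'n::finite \<Rightarrow> real \<Rightarrow> complex"
  assumes int: "\<And>i. integrable lborel (f i)"
  shows "(\<integral>x. (\<Prod>i\<in>UNIV. f i (x $ i)) \<partial>(lborel :: (real^'n) measure)) = (\<Prod>i\<in>UNIV. \<integral>t. f i t \<partial>lborel)"
proof -
  define g where "g b = f (SOME i. b = axis i 1)" for b :: "real^'n"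
  have g: "g (axis i 1) = f i" for i
    unfolding g_def by (rule arg_cong[where f=f]) (rule some_equality, auto simp: axis_eq_axis)
  have pr: "(\<Prod>b\<in>(Basis :: (real^'n) set). h b) = (\<Prod>i\<in>UNIV. h (axis i 1))" for h :: "real^'n \<Rightarrow> complex"
    unfolding Basis_cart_image by (subst prod.reindex[OF inj_axis1]) simp
  have "(\<integral>x. (\<Prod>i\<in>UNIV. f i (x $ i)) \<partial>(lborel :: (real^'n) measure)) = (\<integral>x. (\<Prod>b\<in>Basis. g b (x \<bullet> b)) \<partial>lborel)"
    by (simp add: pr g cart_eq_inner_axis)
  also have "\<dots> = (\<Prod>b\<in>Basis. \<integral>t. g b t \<partial>lborel)"
    by (rule integral_lborel_prod) (auto simp: Basis_cart_image g int)
  also have "\<dots> = (\<Prod>i\<in>UNIV. \<integral>t. f i t \<partial>lborel)"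
    by (simp add: pr g)
  finally show ?thesis .
qed

lemma indicator_torus_prod: "indicator torus x = (\<Prod>i\<in>UNIV. indicator {0..2*pi} (x $ i) :: real)"
proof (cases "x \<in> torus")
  case True
  then have "\<forall>i. x $ i \<in> {0..2*pi}" by (auto simp: torus_def mem_box_cart)
  then show ?thesis using True by simp
next
  case False
  then obtain i where "x $ i \<notin> {0..2*pi}" by (auto simp: torus_def mem_box_cart)
  then have "indicator {0..2*pi} (x $ i) = (0::real)" by simp
  then show ?thesis using False by (auto intro!: prod_zero)
qed

lemma ek_prod: "ek k x = (\<Prod>i\<in>UNIV. exp ((x $ i) *\<^sub>R (\<i> * of_int (k $ i))))"
proof -
  have "lat k \<bullet> x = (\<Sum>i\<in>UNIV. of_int (k $ i) * x $ i)"
    by (simp add: lat_def inner_vec_def)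
  then have "\<i> * complex_of_real (lat k \<bullet> x) = (\<Sum>i\<in>UNIV. (x $ i) *\<^sub>R (\<i> * of_int (k $ i)))"
    by (simp add: sum_distrib_left scaleR_conv_of_real algebra_simps)
  then show ?thesis unfolding ek_def by (simp add: exp_sum)
qed

lemma integral_ek:
  fixes k :: "int^'d::finite"
  shows "(LINT x|torus_measure. ek k x) = (if k = 0 then complex_of_real (tvol TYPE('d::finite)) else 0)"
proof -
  have bm: "(\<lambda>x. indicator torus x *\<^sub>R ek k x) \<in> borel_measurable (borel :: (real^'d) measure)"
    using borel_integrable_compact[OF torus_facts(4) ek_cont[of torus k]] by auto
  have "(LINT x|torus_measure. ek k x) = (\<integral>x. indicator torus x *\<^sub>R ek k x \<partial>lebesgue)"
    by (rule integral_restrict_space) simp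
  also have "\<dots> = (\<integral>x. indicator torus x *\<^sub>R ek k x \<partial>lborel)"
    using bm by (intro integral_completion) simp
  also have "\<dots> = (\<integral>x. (\<Prod>i\<in>UNIV. indicator {0..2*pi} (x $ i) *\<^sub>R exp ((x $ i) *\<^sub>R (\<i> * of_int (k $ i)))) \<partial>lborel)"
    by (simp add: indicator_torus_prod ek_prod scaleR_conv_of_real prod.distrib)
  also have "\<dots> = (\<Prod>i\<in>UNIV. \<integral>t. indicator {0..2*pi} t *\<^sub>R exp (t *\<^sub>R (\<i> * of_int (k $ i))) \<partial>lborel)"
    by (rule integral_lborel_prod_cart) (rule borel_integrable_compact, auto intro!: continuous_intros)
  also have "\<dots> = (\<Prod>i\<in>UNIV. if k $ i = 0 then complex_of_real (2*pi) else 0)"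
    by (simp add: int1d if_distrib cong: if_cong)
  also have "\<dots> = (if k = 0 then complex_of_real (tvol TYPE('d)) else 0)"
  proof (cases "k = 0")
    case True then show ?thesis by (simp add: tvol_def)
  next
    case False
    then obtain i where "k $ i \<noteq> 0" by (auto simp: vec_eq_iff)
    then show ?thesis using False by (auto intro!: prod_zero bexI[of _ i])
  qed
  finally show ?thesis .
qed


definition ip :: "(real^'d::finite \<Rightarrow> complex) \<Rightarrow> (real^'d \<Rightarrow> complex) \<Rightarrow> complex" where
  "ip u w = (LINT x|torus_measure. u x * cnj (w x))"

lemma finite_measure_torus_i: "finite_measure (torus_measure :: (real^'d::finite) measure)"
  by (rule finite_torus)

lemma integrable_const_torus[simp]: "integrable (torus_measure :: (real^'d::finite) measure) (\<lambda>x. c :: 'b::{banach,second_countable_topology})"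
  using finite_measure.integrable_const[OF finite_torus] by blast

lemma cont_meas: "continuous_on UNIV f \<Longrightarrow> f \<in> borel_measurable (torus_measure :: (real^'d::finite) measure)"
  by (rule continuous_imp_measurable_on_sets_lebesgue) (auto intro: continuous_on_subset)

lemma ek_meas[measurable]: "ek k \<in> borel_measurable torus_measure"
  by (rule cont_meas[OF ek_cont])

lemma borel_measurable_cnj[measurable]:
  "f \<in> borel_measurable M \<Longrightarrow> (\<lambda>x. cnj (f x)) \<in> borel_measurable M"
  by (rule measurable_compose[OF _ borel_measurable_continuous_onI[OF continuous_on_cnj[OF continuous_on_id]]])

lemma L2_meas: "L2 u \<Longrightarrow> u \<in> borel_measurable torus_measure"
  by (simp add: L2_def)

lemma L2_integrable: assumes "L2 u" shows "integrable torus_measure u"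
proof (rule Bochner_Integration.integrable_bound[where f="\<lambda>x. 1 + (cmod (u x))\<^sup>2"])
  show "integrable torus_measure (\<lambda>x. 1 + (cmod (u x))\<^sup>2)"
    using assms by (auto simp: L2_def)
  show "u \<in> borel_measurable torus_measure" using assms by (simp add: L2_def)
  have "cmod z \<le> 1 + (cmod z)\<^sup>2" for z
  proof (cases "cmod z \<le> 1")
    case True then show ?thesis by (simp add: add_increasing2)
  next
    case False then have "cmod z * 1 \<le> cmod z * cmod z" by (intro mult_left_mono) auto
    then show ?thesis by (simp add: power2_eq_square)
  qed
  then show "AE x in torus_measure. norm (u x) \<le> norm (1 + (cmod (u x))\<^sup>2)" by auto
qed

lemma L2_sq_integrable: "L2 u \<Longrightarrow> integrable torus_measure (\<lambda>x. (cmod (u x))\<^sup>2)"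
  by (simp add: L2_def)

lemma sq_bound: "cmod (a * cnj b) \<le> (cmod a)\<^sup>2 + (cmod b)\<^sup>2"
proof -
  have "2 * cmod a * cmod b \<le> (cmod a)\<^sup>2 + (cmod b)\<^sup>2"
    by (rule sum_squares_bound)
  moreover have "0 \<le> cmod a * cmod b" by simp
  ultimately have "cmod a * cmod b \<le> (cmod a)\<^sup>2 + (cmod b)\<^sup>2" by linarith
  then show ?thesis by (simp add: norm_mult)
qed

lemma L2_ip_integrable:
  assumes "L2 u" "L2 w" shows "integrable torus_measure (\<lambda>x. u x * cnj (w x))"
proof (rule Bochner_Integration.integrable_bound[where f="\<lambda>x. (cmod (u x))\<^sup>2 + (cmod (w x))\<^sup>2"])
  show "integrable torus_measure (\<lambda>x. (cmod (u x))\<^sup>2 + (cmod (w x))\<^sup>2)"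
    using assms by (auto simp: L2_def)
  have [measurable]: "u \<in> borel_measurable torus_measure" "w \<in> borel_measurable torus_measure"
    using assms by (auto simp: L2_def)
  show "(\<lambda>x. u x * cnj (w x)) \<in> borel_measurable torus_measure" by measurable
  show "AE x in torus_measure. norm (u x * cnj (w x)) \<le> norm ((cmod (u x))\<^sup>2 + (cmod (w x))\<^sup>2)"
    using sq_bound by auto
qed

lemma L2_add: assumes "L2 u" "L2 w" shows "L2 (\<lambda>x. u x + w x)"
  unfolding L2_def
proof
  have [measurable]: "u \<in> borel_measurable torus_measure" "w \<in> borel_measurable torus_measure"
    using assms by (auto simp: L2_def)
  show "(\<lambda>x. u x + w x) \<in> borel_measurable torus_measure" by measurable
  show "integrable torus_measure (\<lambda>x. (cmod (u x + w x))\<^sup>2)"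
  proof (rule Bochner_Integration.integrable_bound[where f="\<lambda>x. 2 * (cmod (u x))\<^sup>2 + 2 * (cmod (w x))\<^sup>2"])
    show "integrable torus_measure (\<lambda>x. 2 * (cmod (u x))\<^sup>2 + 2 * (cmod (w x))\<^sup>2)"
      using assms by (auto simp: L2_def)
    show "(\<lambda>x. (cmod (u x + w x))\<^sup>2) \<in> borel_measurable torus_measure" by measurable
    have "(cmod (a + b))\<^sup>2 \<le> 2 * (cmod a)\<^sup>2 + 2 * (cmod b)\<^sup>2" for a b :: complex
    proof -
      have "cmod (a + b) \<le> cmod a + cmod b" by (rule norm_triangle_ineq)
      then have "(cmod (a + b))\<^sup>2 \<le> (cmod a + cmod b)\<^sup>2" by (simp add: power_mono)
      also have "\<dots> \<le> 2 * (cmod a)\<^sup>2 + 2 * (cmod b)\<^sup>2"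
        using sum_squares_ge_zero[of "cmod a - cmod b" 0] by (simp add: power2_eq_square algebra_simps)
      finally show ?thesis .
    qed
    then show "AE x in torus_measure. norm ((cmod (u x + w x))\<^sup>2) \<le> norm (2 * (cmod (u x))\<^sup>2 + 2 * (cmod (w x))\<^sup>2)"
      by auto
  qed
qed

lemma L2_scale: assumes "L2 u" shows "L2 (\<lambda>x. c * u x)"
proof -
  have [measurable]: "u \<in> borel_measurable torus_measure" using assms by (auto simp: L2_def)
  have "(\<lambda>x. c * u x) \<in> borel_measurable torus_measure" by measurable
  then show ?thesis using assms unfolding L2_def by (simp add: norm_mult power_mult_distrib)
qed

lemma L2_uminus: assumes "L2 u" shows "L2 (\<lambda>x. - u x)"
  using L2_scale[OF assms, of "-1"] by simp

lemma L2_diff: assumes "L2 u" "L2 w" shows "L2 (\<lambda>x. u x - w x)"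
  using L2_add[OF assms(1) L2_uminus[OF assms(2)]] by simp

lemma L2_bounded: assumes "f \<in> borel_measurable torus_measure" "\<And>x. cmod (f x) \<le> B"
  shows "L2 f"
  unfolding L2_def
proof
  show "f \<in> borel_measurable torus_measure" by fact
  show "integrable torus_measure (\<lambda>x. (cmod (f x))\<^sup>2)"
  proof (rule Bochner_Integration.integrable_bound[where f="\<lambda>x. B\<^sup>2"])
    show "integrable torus_measure (\<lambda>x. B\<^sup>2)" by simp
    show "(\<lambda>x. (cmod (f x))\<^sup>2) \<in> borel_measurable torus_measure" using assms by simp
    show "AE x in torus_measure. norm ((cmod (f x))\<^sup>2) \<le> norm (B\<^sup>2)"
      using assms(2) by (auto intro!: power_mono simp: abs_le_square_iff)
  qed
qed

lemma L2_ek: "L2 (ek k)"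
  by (rule L2_bounded[of _ 1]) auto

lemma L2_zero: "L2 (\<lambda>x. 0)"
  by (rule L2_bounded[of _ 0]) auto

lemma L2_sum: "(\<And>k. k \<in> F \<Longrightarrow> L2 (f k)) \<Longrightarrow> L2 (\<lambda>x. \<Sum>k\<in>F. f k x)"
proof (induction F rule: infinite_finite_induct)
  case (infinite F) then show ?case by (simp add: L2_zero)
next
  case empty then show ?case by (simp add: L2_zero)
next
  case (insert k F) then show ?case by (simp add: L2_add)
qed

lemma fourier_ip: "fourier u k = ip u (ek k)"
  by (simp add: fourier_ek ip_def)

lemma ip_ek_ek: "ip (ek k) (ek j) = (if k = j then complex_of_real (tvol TYPE('d::finite)) else 0)"
  for k j :: "int^'d"
  unfolding ip_def by (simp add: cnj_ek ek_mult integral_ek)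

lemma ip_add_left: "L2 u \<Longrightarrow> L2 v \<Longrightarrow> L2 w \<Longrightarrow> ip (\<lambda>x. u x + v x) w = ip u w + ip v w"
  unfolding ip_def by (simp add: distrib_right L2_ip_integrable)

lemma ip_diff_left: "L2 u \<Longrightarrow> L2 v \<Longrightarrow> L2 w \<Longrightarrow> ip (\<lambda>x. u x - v x) w = ip u w - ip v w"
  unfolding ip_def by (simp add: left_diff_distrib L2_ip_integrable)

lemma ip_scale_left: "ip (\<lambda>x. c * u x) w = c * ip u w"
  unfolding ip_def by (simp add: mult.assoc)

lemma ip_cnj: "ip w u = cnj (ip u w)"
proof -
  have "cnj (LINT x|torus_measure. u x * cnj (w x)) = (LINT x|torus_measure. cnj (u x * cnj (w x)))"
    by (rule Bochner_Integration.integral_cnj[symmetric])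
  then show ?thesis unfolding ip_def by (simp add: mult.commute)
qed

lemma ip_sum_left: "(\<And>k. k \<in> F \<Longrightarrow> L2 (f k)) \<Longrightarrow> L2 w \<Longrightarrow> ip (\<lambda>x. \<Sum>k\<in>F. f k x) w = (\<Sum>k\<in>F. ip (f k) w)"
  unfolding ip_def by (simp add: sum_distrib_right L2_ip_integrable integral_sum)

lemma ip_self: "ip u u = complex_of_real (L2norm2 u)"
proof -
  have "(\<lambda>x. u x * cnj (u x)) = (\<lambda>x. complex_of_real ((cmod (u x))\<^sup>2))"
    by (rule ext) (rule complex_norm_square[symmetric])
  then show ?thesis unfolding ip_def L2norm2_def by (simp only: Bochner_Integration.integral_complex_of_real)
qed

lemma L2norm2_nonneg: "L2norm2 u \<ge> 0"
  unfolding L2norm2_def by (rule integral_nonneg_AE) auto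


lemma amgm: fixes x y t :: real assumes "t > 0" shows "x * y \<le> (t/2) * x\<^sup>2 + (1/(2*t)) * y\<^sup>2"
proof -
  have "0 \<le> (t*x - y)\<^sup>2 / (2*t)" using assms by simp
  also have "(t*x - y)\<^sup>2 / (2*t) = (t/2) * x\<^sup>2 + (1/(2*t)) * y\<^sup>2 - x * y"
    using assms by (simp add: field_simps power2_eq_square)
  finally show ?thesis by simp
qed

lemma L2norm2_zero_AE:
  assumes "L2 u" "L2norm2 u = 0" shows "AE x in torus_measure. u x = 0"
proof -
  have "AE x in torus_measure. (cmod (u x))\<^sup>2 = 0"
    using assms integral_nonneg_eq_0_iff_AE[of torus_measure "\<lambda>x. (cmod (u x))\<^sup>2"]
    by (auto simp: L2_def L2norm2_def)
  then show ?thesis by auto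
qed

lemma CS_int:
  assumes u: "L2 u" and w: "L2 w"
  shows "(LINT x|torus_measure. cmod (u x) * cmod (w x)) \<le> sqrt (L2norm2 u) * sqrt (L2norm2 w)"
proof -
  have intp: "integrable torus_measure (\<lambda>x. cmod (u x) * cmod (w x))"
    using integrable_norm[OF L2_ip_integrable[OF u w]] by (simp add: norm_mult)
  show ?thesis
  proof (cases "L2norm2 u = 0 \<or> L2norm2 w = 0")
    case True
    then have "AE x in torus_measure. cmod (u x) * cmod (w x) = 0"
      using L2norm2_zero_AE[OF u] L2norm2_zero_AE[OF w] by (auto elim: AE_mp)
    then have "(LINT x|torus_measure. cmod (u x) * cmod (w x)) = 0"
      by (simp add: integral_eq_zero_AE)
    then show ?thesis by (simp add: L2norm2_nonneg)
  next
    case False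
    define a where "a = sqrt (L2norm2 u)"
    define b where "b = sqrt (L2norm2 w)"
    have a: "a > 0" "a\<^sup>2 = L2norm2 u" using False L2norm2_nonneg[of u] by (auto simp: a_def)
    have b: "b > 0" "b\<^sup>2 = L2norm2 w" using False L2norm2_nonneg[of w] by (auto simp: b_def)
    have "(LINT x|torus_measure. cmod (u x) * cmod (w x))
        \<le> (LINT x|torus_measure. ((b/a)/2) * (cmod (u x))\<^sup>2 + (1/(2*(b/a))) * (cmod (w x))\<^sup>2)"
    proof (rule integral_mono[OF intp])
      fix x
      show "cmod (u x) * cmod (w x) \<le> ((b/a)/2) * (cmod (u x))\<^sup>2 + (1/(2*(b/a))) * (cmod (w x))\<^sup>2"
        using amgm[of "b/a"] a b by simp
    qed (use u w in \<open>auto simp: L2_def\<close>)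
    also have "\<dots> = ((b/a)/2) * a\<^sup>2 + (1/(2*(b/a))) * b\<^sup>2"
      using u w a b by (simp add: L2_def L2norm2_def)
    also have "\<dots> = a * b" using a(1) b(1) by (simp add: field_simps power2_eq_square)
    finally show ?thesis by (simp add: a_def b_def)
  qed
qed

lemma CS:
  assumes u: "L2 u" and w: "L2 w"
  shows "cmod (ip u w) \<le> sqrt (L2norm2 u) * sqrt (L2norm2 w)"
proof -
  have "cmod (ip u w) \<le> (LINT x|torus_measure. cmod (u x * cnj (w x)))"
    unfolding ip_def by (rule integral_norm_bound)
  also have "\<dots> = (LINT x|torus_measure. cmod (u x) * cmod (w x))" by (simp add: norm_mult)
  also have "\<dots> \<le> sqrt (L2norm2 u) * sqrt (L2norm2 w)" by (rule CS_int[OF u w])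
  finally show ?thesis .
qed

lemma L2norm2_const: "L2norm2 (\<lambda>x::real^'d::finite. 1) = tvol TYPE('d)"
  unfolding L2norm2_def using measure_torus[where 'd='d] by simp

lemma L1_bound:
  assumes u: "L2 u"
  shows "(LINT x|torus_measure. cmod (u x)) \<le> sqrt (tvol TYPE('d::finite)) * sqrt (L2norm2 (u :: real^'d \<Rightarrow> complex))"
proof -
  have "(LINT x|torus_measure. cmod (u x)) \<le> sqrt (L2norm2 u) * sqrt (tvol TYPE('d))"
    using CS_int[OF u L2_bounded[of "\<lambda>x::real^'d. 1" 1]] L2norm2_const[where 'd='d] by simp
  then show ?thesis by (simp add: mult.commute)
qed

lemma cnj_mult_self: "cnj z * z = complex_of_real ((cmod z)\<^sup>2)"
  by (metis complex_norm_square mult.commute)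

definition syn :: "(int^'d::finite) set \<Rightarrow> (int^'d \<Rightarrow> complex) \<Rightarrow> real^'d \<Rightarrow> complex" where
  "syn F a x = (\<Sum>k\<in>F. a k * ek k x)"

lemma L2_syn: "L2 (syn F a)"
  unfolding syn_def by (intro L2_sum L2_scale L2_ek)

lemma ip_syn_ek:
  fixes F :: "(int^'d::finite) set"
  assumes "finite F"
  shows "ip (syn F a) (ek j) = (if j \<in> F then a j * complex_of_real (tvol TYPE('d)) else 0)"
proof -
  have "ip (syn F a) (ek j) = (\<Sum>k\<in>F. a k * ip (ek k) (ek j))"
    unfolding syn_def by (subst ip_sum_left) (auto intro: L2_scale L2_ek simp: ip_scale_left)
  also have "\<dots> = (\<Sum>k\<in>F. if k = j then a j * complex_of_real (tvol TYPE('d)) else 0)"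
    by (intro sum.cong) (auto simp: ip_ek_ek)
  also have "\<dots> = (if j \<in> F then a j * complex_of_real (tvol TYPE('d)) else 0)"
    using assms by (simp add: sum.delta')
  finally show ?thesis .
qed

lemma fourier_syn:
  fixes F :: "(int^'d::finite) set"
  assumes "finite F"
  shows "fourier (syn F a) j = (if j \<in> F then a j * complex_of_real (tvol TYPE('d)) else 0)"
  using ip_syn_ek[OF assms] by (simp add: fourier_ip)

lemma ip_right_syn:
  fixes F :: "(int^'d::finite) set"
  assumes "L2 w"
  shows "ip w (syn F a) = (\<Sum>k\<in>F. cnj (a k) * fourier w k)"
proof -
  have "ip (syn F a) w = (\<Sum>k\<in>F. a k * ip (ek k) w)"
    unfolding syn_def by (subst ip_sum_left) (auto intro: L2_scale L2_ek assms simp: ip_scale_left)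
  then show ?thesis
    by (subst ip_cnj) (simp add: fourier_ip ip_cnj[of "ek _" w])
qed

lemma L2norm2_syn:
  fixes F :: "(int^'d::finite) set"
  assumes "finite F"
  shows "L2norm2 (syn F a) = tvol TYPE('d) * (\<Sum>k\<in>F. (cmod (a k))\<^sup>2)"
proof -
  have "complex_of_real (L2norm2 (syn F a)) = ip (syn F a) (syn F a)" by (simp add: ip_self)
  also have "\<dots> = (\<Sum>k\<in>F. cnj (a k) * fourier (syn F a) k)" by (rule ip_right_syn[OF L2_syn])
  also have "\<dots> = (\<Sum>k\<in>F. complex_of_real ((cmod (a k))\<^sup>2) * complex_of_real (tvol TYPE('d)))"
    using assms by (intro sum.cong) (auto simp only: fourier_syn if_True cnj_mult_self mult.assoc[symmetric])
  also have "\<dots> = complex_of_real (tvol TYPE('d) * (\<Sum>k\<in>F. (cmod (a k))\<^sup>2))"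
    by (simp add: sum_distrib_left mult.commute)
  finally show ?thesis by (simp only: of_real_eq_iff)
qed


definition cube :: "nat \<Rightarrow> (int^'d::finite) set" where
  "cube N = {k. \<forall>i. \<bar>k $ i\<bar> \<le> int N}"

lemma finite_cube: "finite (cube N :: (int^'d::finite) set)"
proof -
  have "cube N \<subseteq> (\<lambda>f. vec_lambda f) ` (PiE UNIV (\<lambda>_. {-int N..int N}))"
  proof
    fix k assume k: "k \<in> cube N"
    have "k $ i \<in> {-int N..int N}" for i
    proof -
      have "\<bar>k $ i\<bar> \<le> int N" using k by (simp add: cube_def)
      then show ?thesis by (simp add: abs_le_iff)
    qed
    then have "(\<lambda>i. k $ i) \<in> PiE UNIV (\<lambda>_. {-int N..int N})" by auto
    then have "vec_lambda (\<lambda>i. k $ i) \<in> (\<lambda>f. vec_lambda f) ` (PiE UNIV (\<lambda>_. {-int N..int N}))"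
      by (rule imageI)
    then show "k \<in> (\<lambda>f. vec_lambda f) ` (PiE UNIV (\<lambda>_. {-int N..int N}))"
      by simp
  qed
  then show ?thesis by (rule finite_subset) (intro finite_imageI finite_PiE, auto)
qed

lemma cube_mono: "N \<le> N' \<Longrightarrow> cube N \<subseteq> cube N'"
proof
  fix k assume "N \<le> N'" "k \<in> cube N"
  then have "\<bar>k $ i\<bar> \<le> int N'" for i
    unfolding cube_def using of_nat_mono[OF \<open>N \<le> N'\<close>] by (auto intro: order_trans)
  then show "k \<in> cube N'" by (simp add: cube_def)
qed

lemma in_cube: "k \<in> cube (\<Sum>i\<in>UNIV. nat \<bar>k $ i\<bar>)"
proof -
  have "nat \<bar>k $ i\<bar> \<le> (\<Sum>i\<in>UNIV. nat \<bar>k $ i\<bar>)" for i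
    by (rule member_le_sum) auto
  then have "int (nat \<bar>k $ i\<bar>) \<le> int (\<Sum>i\<in>UNIV. nat \<bar>k $ i\<bar>)" for i
    by (simp only: of_nat_le_iff)
  then have "\<bar>k $ i\<bar> \<le> int (\<Sum>i\<in>UNIV. nat \<bar>k $ i\<bar>)" for i by simp
  then show ?thesis unfolding cube_def by simp
qed

lemma cube_filterlim: "filterlim cube (finite_subsets_at_top UNIV) sequentially"
  unfolding filterlim_def le_filter_def eventually_filtermap
proof (intro allI impI)
  fix P assume "eventually P (finite_subsets_at_top (UNIV :: (int^'d::finite) set))"
  then obtain X where X: "finite X" "\<And>Y. finite Y \<Longrightarrow> X \<subseteq> Y \<Longrightarrow> P Y"
    unfolding eventually_finite_subsets_at_top by auto
  define N0 where "N0 = (\<Sum>k\<in>X. \<Sum>i\<in>UNIV. nat \<bar>k $ i\<bar>)"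
  have "X \<subseteq> cube N0"
  proof
    fix k assume "k \<in> X"
    then have "(\<Sum>i\<in>UNIV. nat \<bar>k $ i\<bar>) \<le> N0" unfolding N0_def
      using X(1) by (intro member_le_sum) auto
    then show "k \<in> cube N0" using in_cube[of k] cube_mono by blast
  qed
  have "P (cube N)" if "N \<ge> N0" for N
  proof -
    have "X \<subseteq> cube N" using \<open>X \<subseteq> cube N0\<close> cube_mono[OF that] by blast
    then show ?thesis using X(2) finite_cube by blast
  qed
  then have "\<forall>N\<ge>N0. P (cube N)" by blast
  then show "eventually (\<lambda>N. P (cube N)) sequentially" by (auto simp: eventually_sequentially)
qed

lemma has_sum_cube:
  fixes f :: "int^'d::finite \<Rightarrow> 'b::{comm_monoid_add, topological_space}"
  assumes "(f has_sum S) UNIV"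
  shows "(\<lambda>N. sum f (cube N)) \<longlonglongrightarrow> S"
  using filterlim_compose[OF assms[unfolded has_sum_def] cube_filterlim] by (simp add: o_def)

lemma cnj_div_mult: "cnj (z / complex_of_real V) * z = complex_of_real ((cmod z)\<^sup>2 / V)"
proof -
  have "cnj (z / complex_of_real V) * z = (cnj z * z) / complex_of_real V" by simp
  also have "\<dots> = complex_of_real ((cmod z)\<^sup>2) / complex_of_real V" by (simp only: cnj_mult_self)
  finally show ?thesis by (simp only: of_real_divide)
qed

lemma bessel:
  fixes u :: "real^'d::finite \<Rightarrow> complex"
  assumes u: "L2 u" and F: "finite F"
  shows "(\<Sum>k\<in>F. (cmod (fourier u k))\<^sup>2) \<le> tvol TYPE('d) * L2norm2 u"
proof -
  define V where "V = tvol TYPE('d)"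
  have V: "V > 0" by (simp add: V_def tvol_pos)
  define s where "s = syn F (\<lambda>k. fourier u k / complex_of_real V)"
  define X where "X = (\<Sum>k\<in>F. (cmod (fourier u k))\<^sup>2) / V"
  have s: "L2 s" unfolding s_def by (rule L2_syn)
  have us: "ip u s = complex_of_real X"
  proof -
    have "ip u s = (\<Sum>k\<in>F. cnj (fourier u k / complex_of_real V) * fourier u k)"
      unfolding s_def by (rule ip_right_syn[OF u])
    also have "\<dots> = (\<Sum>k\<in>F. complex_of_real ((cmod (fourier u k))\<^sup>2 / V))"
      by (intro sum.cong refl) (rule cnj_div_mult)
    finally show ?thesis by (simp add: X_def sum_divide_distrib)
  qed
  have su: "ip s u = complex_of_real X" using us by (subst ip_cnj) simp
  have ss: "L2norm2 s = X"
  proof -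
    have "L2norm2 s = V * (\<Sum>k\<in>F. (cmod (fourier u k / complex_of_real V))\<^sup>2)"
      unfolding s_def V_def by (rule L2norm2_syn[OF F])
    also have "\<dots> = X" using V
      by (simp add: X_def sum_divide_distrib[symmetric] norm_divide power_divide sum_distrib_left[symmetric] power2_eq_square)
    finally show ?thesis .
  qed
  have "complex_of_real (L2norm2 (\<lambda>x. u x - s x)) = ip (\<lambda>x. u x - s x) (\<lambda>x. u x - s x)"
    by (simp add: ip_self)
  also have "\<dots> = ip u (\<lambda>x. u x - s x) - ip s (\<lambda>x. u x - s x)"
    by (rule ip_diff_left[OF u s L2_diff[OF u s]])
  also have "ip u (\<lambda>x. u x - s x) = cnj (ip u u - ip s u)"
    by (subst ip_cnj) (simp add: ip_diff_left[OF u s u])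
  also have "ip s (\<lambda>x. u x - s x) = cnj (ip u s - ip s s)"
    by (subst ip_cnj) (simp add: ip_diff_left[OF u s s])
  finally have "complex_of_real (L2norm2 (\<lambda>x. u x - s x)) = complex_of_real (L2norm2 u - X)"
    by (simp add: us su ss ip_self)
  then have "L2norm2 (\<lambda>x. u x - s x) = L2norm2 u - X" by (simp only: of_real_eq_iff)
  then have "X \<le> L2norm2 u" using L2norm2_nonneg[of "\<lambda>x. u x - s x"] by simp
  then show ?thesis using V by (simp add: X_def V_def[symmetric] divide_le_eq mult.commute)
qed

lemma fourier_sq_summable:
  fixes u :: "real^'d::finite \<Rightarrow> complex"
  assumes u: "L2 u"
  shows "(\<lambda>k. (cmod (fourier u k))\<^sup>2) summable_on UNIV"
  by (rule nonneg_bdd_above_summable_on) (auto intro!: bdd_aboveI[where M="tvol TYPE('d) * L2norm2 u"] bessel[OF u])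


lemma L2_complete:
  fixes S :: "nat \<Rightarrow> real^'d::finite \<Rightarrow> complex"
  assumes L2S: "\<And>n. L2 (S n)"
    and cauchy: "\<And>e. e > 0 \<Longrightarrow> \<exists>N. \<forall>n\<ge>N. \<forall>m\<ge>N. L2norm2 (\<lambda>x. S n x - S m x) < e"
  shows "\<exists>w. L2 w \<and> (\<lambda>n. L2norm2 (\<lambda>x. S n x - w x)) \<longlonglongrightarrow> 0"
proof -
  define V where "V = tvol TYPE('d)"
  have V: "V > 0" by (simp add: V_def tvol_pos)
  have L1c: "\<exists>N. \<forall>i\<ge>N. \<forall>j\<ge>N. (LINT x|torus_measure. norm (S i x - S j x)) < e" if e: "e > 0" for e
  proof -
    define e' where "e' = e\<^sup>2 / (V + 1)"
    have e': "e' > 0" using e V by (simp add: e'_def)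
    obtain N where N: "\<And>n m. n \<ge> N \<Longrightarrow> m \<ge> N \<Longrightarrow> L2norm2 (\<lambda>x. S n x - S m x) < e'"
      using cauchy[OF e'] by blast
    have "sqrt V * sqrt e' < e"
    proof -
      have "sqrt V * sqrt e' = sqrt (V * e')" by (simp add: real_sqrt_mult)
      also have "V * e' < e\<^sup>2" using V e by (simp add: e'_def field_simps)
      then have "sqrt (V * e') < sqrt (e\<^sup>2)" by (rule real_sqrt_less_mono)
      finally show ?thesis using e by simp
    qed
    moreover have "(LINT x|torus_measure. norm (S i x - S j x)) \<le> sqrt V * sqrt e'" if "i \<ge> N" "j \<ge> N" for i j
    proof -
      have "(LINT x|torus_measure. norm (S i x - S j x)) \<le> sqrt V * sqrt (L2norm2 (\<lambda>x. S i x - S j x))"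
        unfolding V_def by (rule L1_bound[OF L2_diff[OF L2S L2S]])
      also have "\<dots> \<le> sqrt V * sqrt e'"
        using N[OF that] V by (intro mult_left_mono real_sqrt_le_mono) auto
      finally show ?thesis .
    qed
    ultimately show ?thesis by (meson order_le_less_trans)
  qed
  obtain r where r: "strict_mono r" "AE x in torus_measure. Cauchy (\<lambda>i. S (r i) x)"
    using cauchy_L1_AE_cauchy_subseq[OF L2_integrable[OF L2S] L1c] by blast
  define w where "w x = lim (\<lambda>i. S (r i) x)" for x
  have Smeas[measurable]: "S n \<in> borel_measurable torus_measure" for n using L2S[of n] by (simp add: L2_def)
  have wmeas[measurable]: "w \<in> borel_measurable torus_measure"
    unfolding w_def by (rule borel_measurable_lim_metric) simp
  have conv: "AE x in torus_measure. (\<lambda>i. S (r i) x) \<longlonglongrightarrow> w x"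
    using r(2) by eventually_elim (simp add: w_def Cauchy_convergent_iff convergent_LIMSEQ_iff)
  have main: "L2 (\<lambda>x. S n x - w x) \<and> L2norm2 (\<lambda>x. S n x - w x) \<le> e"
    if e: "e > 0" and N: "\<And>n m. n \<ge> N \<Longrightarrow> m \<ge> N \<Longrightarrow> L2norm2 (\<lambda>x. S n x - S m x) < e" and n: "n \<ge> N" for e N n
  proof -
    have "(\<integral>\<^sup>+x. ennreal ((cmod (S n x - w x))\<^sup>2) \<partial>torus_measure)
        = (\<integral>\<^sup>+x. liminf (\<lambda>i. ennreal ((cmod (S n x - S (r i) x))\<^sup>2)) \<partial>torus_measure)"
    proof (rule nn_integral_cong_AE)
      show "AE x in torus_measure. ennreal ((cmod (S n x - w x))\<^sup>2) = liminf (\<lambda>i. ennreal ((cmod (S n x - S (r i) x))\<^sup>2))"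
        using conv
      proof eventually_elim
        case (elim x)
        have "(\<lambda>i. ennreal ((cmod (S n x - S (r i) x))\<^sup>2)) \<longlonglongrightarrow> ennreal ((cmod (S n x - w x))\<^sup>2)"
          by (intro tendsto_intros elim)
        then show ?case by (metis lim_imp_Liminf trivial_limit_sequentially)
      qed
    qed
    also have "\<dots> \<le> liminf (\<lambda>i. \<integral>\<^sup>+x. ennreal ((cmod (S n x - S (r i) x))\<^sup>2) \<partial>torus_measure)"
      by (rule nn_integral_liminf) measurable
    also have "\<dots> \<le> ennreal e"
    proof (rule Liminf_le)
      show "eventually (\<lambda>i. (\<integral>\<^sup>+x. ennreal ((cmod (S n x - S (r i) x))\<^sup>2) \<partial>torus_measure) \<le> ennreal e) sequentially"
        unfolding eventually_sequentially
      proof (intro exI allI impI)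
        fix i assume "N \<le> i"
        then have "r i \<ge> N" using seq_suble[OF r(1), of i] by simp
        have "(\<integral>\<^sup>+x. ennreal ((cmod (S n x - S (r i) x))\<^sup>2) \<partial>torus_measure) = ennreal (L2norm2 (\<lambda>x. S n x - S (r i) x))"
          unfolding L2norm2_def
          by (rule nn_integral_eq_integral) (use L2_diff[OF L2S L2S] in \<open>auto simp: L2_def\<close>)
        also have "\<dots> \<le> ennreal e" using N[OF n \<open>r i \<ge> N\<close>] by (intro ennreal_leI) simp
        finally show "(\<integral>\<^sup>+x. ennreal ((cmod (S n x - S (r i) x))\<^sup>2) \<partial>torus_measure) \<le> ennreal e" .
      qed
    qed simp
    finally have bnd: "(\<integral>\<^sup>+x. ennreal ((cmod (S n x - w x))\<^sup>2) \<partial>torus_measure) \<le> ennreal e" .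
    have int: "integrable torus_measure (\<lambda>x. (cmod (S n x - w x))\<^sup>2)"
      by (rule integrableI_nonneg) (use bnd in \<open>auto simp: top.not_eq_extremum intro: le_less_trans\<close>)
    have L2: "L2 (\<lambda>x. S n x - w x)" unfolding L2_def using int by simp
    have "L2norm2 (\<lambda>x. S n x - w x) = enn2real (\<integral>\<^sup>+x. ennreal ((cmod (S n x - w x))\<^sup>2) \<partial>torus_measure)"
      unfolding L2norm2_def by (rule integral_eq_nn_integral) auto
    also have "\<dots> \<le> e" using bnd e by (intro enn2real_leI) auto
    finally show ?thesis using L2 by simp
  qed
  obtain N1 where N1: "\<And>n m. n \<ge> N1 \<Longrightarrow> m \<ge> N1 \<Longrightarrow> L2norm2 (\<lambda>x. S n x - S m x) < 1"
    using cauchy[of 1] by auto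
  have L2d: "L2 (\<lambda>x. S N1 x - w x)" using main[OF _ N1] by simp
  have Lw: "L2 w" using L2_diff[OF L2S[of N1] L2d] by simp
  have "(\<lambda>n. L2norm2 (\<lambda>x. S n x - w x)) \<longlonglongrightarrow> 0"
  proof (rule LIMSEQ_I)
    fix e :: real assume e: "e > 0"
    obtain N where N: "\<And>n m. n \<ge> N \<Longrightarrow> m \<ge> N \<Longrightarrow> L2norm2 (\<lambda>x. S n x - S m x) < e/2"
      using cauchy[of "e/2"] e by auto
    have "\<forall>n\<ge>N. norm (L2norm2 (\<lambda>x. S n x - w x) - 0) < e"
    proof (intro allI impI)
      fix n assume "n \<ge> N"
      then have "L2norm2 (\<lambda>x. S n x - w x) \<le> e/2" using main[of "e/2" N n] N e by auto
      then show "norm (L2norm2 (\<lambda>x. S n x - w x) - 0) < e" using L2norm2_nonneg[of "\<lambda>x. S n x - w x"] e by simp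
    qed
    then show "\<exists>no. \<forall>n\<ge>no. norm (L2norm2 (\<lambda>x. S n x - w x) - 0) < e" by blast
  qed
  then show ?thesis using Lw by blast
qed


lemma L2norm2_add:
  assumes a: "L2 a" and b: "L2 b"
  shows "L2norm2 (\<lambda>x. a x + b x) = L2norm2 a + L2norm2 b + 2 * Re (ip a b)"
proof -
  have "complex_of_real (L2norm2 (\<lambda>x. a x + b x)) = ip (\<lambda>x. a x + b x) (\<lambda>x. a x + b x)"
    by (simp add: ip_self)
  also have "\<dots> = ip a (\<lambda>x. a x + b x) + ip b (\<lambda>x. a x + b x)"
    by (rule ip_add_left[OF a b L2_add[OF a b]])
  also have "ip a (\<lambda>x. a x + b x) = cnj (ip a a + ip b a)"
    by (subst ip_cnj) (simp add: ip_add_left[OF a b a])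
  also have "ip b (\<lambda>x. a x + b x) = cnj (ip a b + ip b b)"
    by (subst ip_cnj) (simp add: ip_add_left[OF a b b])
  finally have "complex_of_real (L2norm2 (\<lambda>x. a x + b x)) = cnj (ip a a) + cnj (ip b b) + (ip a b + cnj (ip a b))"
    by (simp add: ip_cnj[of b a])
  also have "\<dots> = complex_of_real (L2norm2 a + L2norm2 b + 2 * Re (ip a b))"
    by (simp add: ip_self complex_add_cnj)
  finally show ?thesis by (simp only: of_real_eq_iff)
qed

lemma L2norm2_minus_commute: "L2norm2 (\<lambda>x. a x - b x) = L2norm2 (\<lambda>x. b x - a x)"
  unfolding L2norm2_def by (simp add: norm_minus_commute)

lemma RF:
  fixes c :: "int^'d::finite \<Rightarrow> complex"
  assumes sq: "(\<lambda>k. (cmod (c k))\<^sup>2) summable_on UNIV"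
  shows "\<exists>w. L2 w \<and> (\<forall>k. fourier w k = c k) \<and>
            L2norm2 w = infsum (\<lambda>k. (cmod (c k))\<^sup>2) UNIV / tvol TYPE('d)"
proof -
  define V where "V = tvol TYPE('d)"
  have V: "V > 0" by (simp add: V_def tvol_pos)
  define a where "a k = c k / complex_of_real V" for k
  define S where "S n = syn (cube n) a" for n
  define T where "T n = (\<Sum>k\<in>cube n. (cmod (c k))\<^sup>2)" for n
  define Tinf where "Tinf = infsum (\<lambda>k. (cmod (c k))\<^sup>2) UNIV"
  have L2S: "L2 (S n)" for n unfolding S_def by (rule L2_syn)
  have T: "T \<longlonglongrightarrow> Tinf"
    unfolding T_def Tinf_def by (rule has_sum_cube) (use sq in simp)
  have sqa: "(cmod (a k))\<^sup>2 = (cmod (c k))\<^sup>2 / V\<^sup>2" for k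
    using V by (simp add: a_def norm_divide power_divide)
  have NS: "L2norm2 (S n) = T n / V" for n
  proof -
    have "L2norm2 (S n) = V * (\<Sum>k\<in>cube n. (cmod (a k))\<^sup>2)"
      unfolding S_def V_def by (rule L2norm2_syn[OF finite_cube])
    also have "\<dots> = V * ((\<Sum>k\<in>cube n. (cmod (c k))\<^sup>2) / V\<^sup>2)"
      by (simp only: sqa sum_divide_distrib)
    also have "\<dots> = T n / V" unfolding T_def using V by (simp add: power2_eq_square)
    finally show ?thesis .
  qed
  have diff: "L2norm2 (\<lambda>x. S n x - S m x) = (T n - T m) / V" if "m \<le> n" for m n
  proof -
    have sub: "cube m \<subseteq> cube n" by (rule cube_mono[OF that])
    have "(\<lambda>x. S n x - S m x) = syn (cube n - cube m) a"
      unfolding S_def syn_def by (rule ext) (simp add: sum_diff[OF finite_cube sub])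
    then have "L2norm2 (\<lambda>x. S n x - S m x) = V * (\<Sum>k\<in>cube n - cube m. (cmod (a k))\<^sup>2)"
      using L2norm2_syn[of "cube n - cube m" a] by (simp add: V_def finite_cube)
    also have "\<dots> = V * ((\<Sum>k\<in>cube n - cube m. (cmod (c k))\<^sup>2) / V\<^sup>2)"
      by (simp only: sqa sum_divide_distrib)
    also have "\<dots> = (T n - T m) / V" unfolding T_def using V
      by (simp add: sum_diff[OF finite_cube sub] power2_eq_square)
    finally show ?thesis .
  qed
  have cauchy: "\<exists>N. \<forall>n\<ge>N. \<forall>m\<ge>N. L2norm2 (\<lambda>x. S n x - S m x) < e" if e: "e > 0" for e
  proof -
    obtain N where N: "\<And>m n. m \<ge> N \<Longrightarrow> n \<ge> N \<Longrightarrow> norm (T m - T n) < e * V"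
      using CauchyD[OF LIMSEQ_imp_Cauchy[OF T], of "e * V"] e V by auto
    have "L2norm2 (\<lambda>x. S n x - S m x) < e" if "n \<ge> N" "m \<ge> N" for n m
    proof (cases "m \<le> n")
      case True
      then show ?thesis using N[OF that] V by (simp add: diff pos_divide_less_eq)
    next
      case False
      then show ?thesis using N[OF that(2,1)] V
        by (subst L2norm2_minus_commute) (simp add: diff pos_divide_less_eq)
    qed
    then show ?thesis by blast
  qed
  obtain w where w: "L2 w" "(\<lambda>n. L2norm2 (\<lambda>x. S n x - w x)) \<longlonglongrightarrow> 0"
    using L2_complete[OF L2S cauchy] by blast
  have sqrt0: "(\<lambda>n. sqrt (L2norm2 (\<lambda>x. S n x - w x))) \<longlonglongrightarrow> 0"
    using tendsto_real_sqrt[OF w(2)] by simp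
  have four: "fourier w k = c k" for k
  proof -
    have lim1: "(\<lambda>n. fourier (S n) k - fourier w k) \<longlonglongrightarrow> 0"
    proof (rule Lim_null_comparison)
      show "eventually (\<lambda>n. norm (fourier (S n) k - fourier w k) \<le> sqrt (L2norm2 (\<lambda>x. S n x - w x)) * sqrt V) sequentially"
      proof (rule always_eventually, rule allI)
        fix n
        have "fourier (S n) k - fourier w k = ip (\<lambda>x. S n x - w x) (ek k)"
          by (simp add: fourier_ip ip_diff_left[OF L2S w(1) L2_ek])
        also have "cmod \<dots> \<le> sqrt (L2norm2 (\<lambda>x. S n x - w x)) * sqrt (L2norm2 (ek k))"
          by (rule CS[OF L2_diff[OF L2S w(1)] L2_ek])
        also have "L2norm2 (ek k) = V"
          unfolding L2norm2_def V_def using measure_torus[where 'd='d] by simp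
        finally show "norm (fourier (S n) k - fourier w k) \<le> sqrt (L2norm2 (\<lambda>x. S n x - w x)) * sqrt V" .
      qed
      show "(\<lambda>n. sqrt (L2norm2 (\<lambda>x. S n x - w x)) * sqrt V) \<longlonglongrightarrow> 0"
        using tendsto_mult_left_zero[OF sqrt0] by simp
    qed
    have ev: "eventually (\<lambda>n. fourier (S n) k = c k) sequentially"
    proof -
      have "k \<in> cube n" if "n \<ge> (\<Sum>i\<in>UNIV. nat \<bar>k $ i\<bar>)" for n
        using in_cube[of k] cube_mono[OF that] by blast
      then show ?thesis unfolding eventually_sequentially S_def
        using V by (auto simp: fourier_syn finite_cube a_def V_def)
    qed
    have "(\<lambda>n. fourier (S n) k) \<longlonglongrightarrow> c k" using tendsto_eventually[OF ev] .
    moreover have "(\<lambda>n. fourier (S n) k) \<longlonglongrightarrow> fourier w k"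
      using tendsto_add[OF lim1 tendsto_const[of "fourier w k"]] by simp
    ultimately show ?thesis using LIMSEQ_unique by blast
  qed
  have norm: "L2norm2 w = Tinf / V"
  proof -
    have "(\<lambda>n. L2norm2 (S n)) \<longlonglongrightarrow> Tinf / V"
      unfolding NS using V by (intro tendsto_intros T) simp
    moreover have "(\<lambda>n. L2norm2 (S n)) \<longlonglongrightarrow> L2norm2 w"
    proof -
      have eq: "L2norm2 (S n) = L2norm2 w + L2norm2 (\<lambda>x. S n x - w x) + 2 * Re (ip w (\<lambda>x. S n x - w x))" for n
        using L2norm2_add[OF w(1) L2_diff[OF L2S w(1)]] by simp
      have "(\<lambda>n. Re (ip w (\<lambda>x. S n x - w x))) \<longlonglongrightarrow> 0"
      proof (rule Lim_null_comparison)
        show "eventually (\<lambda>n. norm (Re (ip w (\<lambda>x. S n x - w x))) \<le> sqrt (L2norm2 w) * sqrt (L2norm2 (\<lambda>x. S n x - w x))) sequentially"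
          using CS[OF w(1) L2_diff[OF L2S w(1)]] abs_Re_le_cmod
          by (intro always_eventually allI) (auto intro: order_trans)
        show "(\<lambda>n. sqrt (L2norm2 w) * sqrt (L2norm2 (\<lambda>x. S n x - w x))) \<longlonglongrightarrow> 0"
          using tendsto_mult_right_zero[OF sqrt0] by simp
      qed
      then have "(\<lambda>n. L2norm2 w + L2norm2 (\<lambda>x. S n x - w x) + 2 * Re (ip w (\<lambda>x. S n x - w x))) \<longlonglongrightarrow> L2norm2 w + 0 + 2 * 0"
        by (intro tendsto_intros w(2))
      then show ?thesis by (simp add: eq)
    qed
    ultimately show ?thesis using LIMSEQ_unique by blast
  qed
  show ?thesis using w(1) four norm by (auto simp: Tinf_def V_def)
qed


inductive_set trigp :: "(real^'d::finite \<Rightarrow> complex) set" where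
  tp_ek: "ek k \<in> trigp"
| tp_scale: "h \<in> trigp \<Longrightarrow> (\<lambda>x. c * h x) \<in> trigp"
| tp_add: "h \<in> trigp \<Longrightarrow> g \<in> trigp \<Longrightarrow> (\<lambda>x. h x + g x) \<in> trigp"

lemma tp_const: "(\<lambda>x. c) \<in> trigp"
  using tp_scale[OF tp_ek[of 0], of c] by simp

lemma tp_mult_ek: "g \<in> trigp \<Longrightarrow> (\<lambda>x. ek k x * g x) \<in> trigp"
proof (induction g rule: trigp.induct)
  case (tp_ek j) then show ?case by (simp add: ek_mult trigp.tp_ek)
next
  case (tp_scale h c)
  have "(\<lambda>x. ek k x * (c * h x)) = (\<lambda>x. c * (ek k x * h x))" by (simp add: algebra_simps)
  then show ?case using trigp.tp_scale[OF tp_scale.IH] by simp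
next
  case (tp_add h g)
  have "(\<lambda>x. ek k x * (h x + g x)) = (\<lambda>x. ek k x * h x + ek k x * g x)" by (simp add: algebra_simps)
  then show ?case using trigp.tp_add[OF tp_add.IH] by simp
qed

lemma tp_mult: "h \<in> trigp \<Longrightarrow> g \<in> trigp \<Longrightarrow> (\<lambda>x. h x * g x) \<in> trigp"
proof (induction h rule: trigp.induct)
  case (tp_ek k) then show ?case by (rule tp_mult_ek)
next
  case (tp_scale h c)
  have "(\<lambda>x. c * h x * g x) = (\<lambda>x. c * (h x * g x))" by (simp add: algebra_simps)
  then show ?case using trigp.tp_scale[OF tp_scale.IH[OF tp_scale.prems]] by simp
next
  case (tp_add h1 h2)
  have "(\<lambda>x. (h1 x + h2 x) * g x) = (\<lambda>x. h1 x * g x + h2 x * g x)" by (simp add: algebra_simps)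
  then show ?case using trigp.tp_add[OF tp_add.IH(1)[OF tp_add.prems] tp_add.IH(2)[OF tp_add.prems]] by simp
qed

lemma tp_prod: "finite I \<Longrightarrow> (\<And>i. i \<in> I \<Longrightarrow> h i \<in> trigp) \<Longrightarrow> (\<lambda>x. \<Prod>i\<in>I. h i x) \<in> trigp"
proof (induction I rule: finite_induct)
  case empty then show ?case by (simp add: tp_const)
next
  case (insert i I) then show ?case by (simp add: tp_mult)
qed

lemma tp_cont: "h \<in> trigp \<Longrightarrow> continuous_on UNIV h"
  by (induction h rule: trigp.induct) (auto intro!: continuous_intros ek_cont)

lemma ek_axis: "ek (axis i 1) x = exp (\<i> * complex_of_real (x $ i))"
proof -
  have "lat (axis i (1::int)) = axis i 1"
    by (simp add: lat_def axis_def vec_eq_iff)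
  then have "lat (axis i (1::int)) \<bullet> x = x $ i"
    by (simp add: inner_axis')
  then show ?thesis by (simp add: ek_def)
qed

lemma tp_cos: "(\<lambda>x. complex_of_real (cos (x $ i - c))) \<in> trigp"
proof -
  have "complex_of_real (cos (x $ i - c)) =
        (exp (- (\<i> * of_real c)) / 2) * ek (axis i 1) x + (exp (\<i> * of_real c) / 2) * ek (- axis i 1) x" for x
  proof -
    have "complex_of_real (cos (x $ i - c)) = cos (complex_of_real (x $ i - c))"
      by (metis cos_of_real)
    also have "\<dots> = (exp (\<i> * complex_of_real (x $ i - c)) + exp (- (\<i> * complex_of_real (x $ i - c)))) / 2"
      by (rule cos_exp_eq)
    also have "\<dots> = (exp (- (\<i> * of_real c)) / 2) * exp (\<i> * complex_of_real (x $ i))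
                    + (exp (\<i> * of_real c) / 2) * exp (- (\<i> * complex_of_real (x $ i)))"
      by (simp add: algebra_simps exp_add[symmetric] exp_diff[symmetric] add_divide_distrib)
    also have "\<dots> = (exp (- (\<i> * of_real c)) / 2) * ek (axis i 1) x + (exp (\<i> * of_real c) / 2) * ek (- axis i 1) x"
      by (simp add: ek_axis cnj_ek[symmetric] cnj_exp_it)
    finally show ?thesis .
  qed
  then have eq: "(\<lambda>x. complex_of_real (cos (x $ i - c))) =
      (\<lambda>x. (exp (- (\<i> * of_real c)) / 2) * ek (axis i 1) x + (exp (\<i> * of_real c) / 2) * ek (- axis i 1) x)"
    by (rule ext)
  show ?thesis unfolding eq by (intro tp_add tp_scale tp_ek)
qed

lemma tp_poly_cos:
  assumes "real_polynomial_function p"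
  shows "(\<lambda>x. complex_of_real (p (cos (x $ i - c)))) \<in> trigp"
  using assms
proof (induction p rule: real_polynomial_function.induct)
  case (linear f)
  then obtain a where "f = (\<lambda>x. x * a)" using real_bounded_linear by blast
  then have "(\<lambda>x. complex_of_real (f (cos (x $ i - c)))) = (\<lambda>x. complex_of_real a * complex_of_real (cos (x $ i - c)))"
    by (simp add: mult.commute)
  then show ?case using tp_scale[OF tp_cos] by simp
next
  case (const c) then show ?case by (simp add: tp_const)
next
  case (add f g) then show ?case by (simp add: tp_add)
next
  case (mult f g) then show ?case by (simp add: tp_mult)
qed

lemma integrable_mult_cont:
  assumes f: "integrable torus_measure f" and h: "continuous_on UNIV h"
  shows "integrable torus_measure (\<lambda>x. f x * h x :: complex)"
proof -
  obtain B where B: "\<And>x. x \<in> torus \<Longrightarrow> norm (h x) \<le> B"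
    using compact_imp_bounded[OF compact_continuous_image[OF continuous_on_subset[OF h] torus_facts(4)]]
    by (auto simp: bounded_iff)
  show ?thesis
  proof (rule Bochner_Integration.integrable_bound[where f="\<lambda>x. B * f x"])
    show "integrable torus_measure (\<lambda>x. B * f x)" using f by simp
    have [measurable]: "h \<in> borel_measurable torus_measure" by (rule cont_meas[OF h])
    have [measurable]: "f \<in> borel_measurable torus_measure" using f by auto
    show "(\<lambda>x. f x * h x) \<in> borel_measurable torus_measure" by measurable
    have "norm (f x * h x) \<le> norm (B * f x)" if "x \<in> torus" for x
    proof -
      have "B \<ge> 0" using B[OF that] norm_ge_zero order_trans by blast
      then show ?thesis using mult_left_mono[OF B[OF that] norm_ge_zero[of "f x"]]
        by (simp add: norm_mult mult.commute abs_of_nonneg)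
    qed
    then show "AE x in torus_measure. norm (f x * h x) \<le> norm (B * f x)"
      by (intro AE_I2) simp
  qed
qed

lemma tp_int_zero:
  assumes f: "integrable torus_measure f" and four: "\<And>k. fourier f k = 0"
  shows "h \<in> trigp \<Longrightarrow> (LINT x|torus_measure. f x * h x) = 0"
proof (induction h rule: trigp.induct)
  case (tp_ek k)
  have "(LINT x|torus_measure. f x * ek k x) = fourier f (-k)"
    by (simp add: fourier_ek cnj_ek)
  then show ?case using four by simp
next
  case (tp_scale h c)
  have "(LINT x|torus_measure. f x * (c * h x)) = c * (LINT x|torus_measure. f x * h x)"
    by (simp add: algebra_simps)
  then show ?case using tp_scale.IH by simp
next
  case (tp_add h g)
  have "(LINT x|torus_measure. f x * (h x + g x)) = (LINT x|torus_measure. f x * h x) + (LINT x|torus_measure. f x * g x)"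
    by (simp add: distrib_left integrable_mult_cont[OF f tp_cont[OF tp_add.hyps(1)]] integrable_mult_cont[OF f tp_cont[OF tp_add.hyps(2)]])
  then show ?case using tp_add.IH by simp
qed


lemma poly_approx:
  fixes t :: real
  shows "\<exists>p :: nat \<Rightarrow> real \<Rightarrow> real. (\<forall>n. real_polynomial_function (p n)) \<and>
    (\<forall>n. \<forall>s\<in>{-1..1}. \<bar>p n s\<bar> \<le> 2) \<and>
    (\<forall>s\<in>{-1..1}. (\<lambda>n. p n s) \<longlonglongrightarrow> (if s > t then 1 else 0))"
proof -
  define \<psi> where "\<psi> n s = max 0 (min 1 (real n * (s - t)))" for n :: nat and s
  have cont: "continuous_on {-1..1} (\<psi> n)" for n
    unfolding \<psi>_def by (intro continuous_intros)
  have "\<forall>n. \<exists>q. real_polynomial_function q \<and> (\<forall>s\<in>{-1..1}. \<bar>\<psi> n s - q s\<bar> < 1 / (real n + 1))"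
  proof
    fix n
    obtain q where "real_polynomial_function q" "\<And>s. s \<in> {-1..1} \<Longrightarrow> \<bar>\<psi> n s - q s\<bar> < 1 / (real n + 1)"
      using Stone_Weierstrass_real_polynomial_function[OF compact_Icc cont, of "1 / (real n + 1)"] by auto
    then show "\<exists>q. real_polynomial_function q \<and> (\<forall>s\<in>{-1..1}. \<bar>\<psi> n s - q s\<bar> < 1 / (real n + 1))" by blast
  qed
  then obtain p where p: "\<And>n. real_polynomial_function (p n)"
      "\<And>n s. s \<in> {-1..1} \<Longrightarrow> \<bar>\<psi> n s - p n s\<bar> < 1 / (real n + 1)"
    by metis
  have psi01: "0 \<le> \<psi> n s \<and> \<psi> n s \<le> 1" for n s by (simp add: \<psi>_def)
  have bnd: "\<bar>p n s\<bar> \<le> 2" if "s \<in> {-1..1}" for n s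
  proof -
    have "1 / (real n + 1) \<le> 1" by (simp add: divide_le_eq)
    then show ?thesis using p(2)[OF that, of n] psi01[of n s] by linarith
  qed
  have lim: "(\<lambda>n. p n s) \<longlonglongrightarrow> (if s > t then 1 else 0)" if s: "s \<in> {-1..1}" for s
  proof -
    have ev: "eventually (\<lambda>n. \<psi> n s = (if s > t then 1 else 0)) sequentially"
    proof (cases "s > t")
      case True
      obtain N :: nat where N: "1 / (s - t) \<le> real N" using real_arch_simple by blast
      have "\<psi> n s = 1" if "n \<ge> N" for n
      proof -
        have "1 / (s - t) \<le> real n" using N that by (meson of_nat_le_iff order_trans)
        then have "1 \<le> real n * (s - t)" using True by (simp add: divide_le_eq)
        then show ?thesis by (simp add: \<psi>_def)
      qed
      then show ?thesis using True unfolding eventually_sequentially by auto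
    next
      case False
      have h: "real n * (s - t) \<le> 0" for n using False by (simp add: mult_nonneg_nonpos)
      have "\<psi> n s = 0" for n using h[of n] by (simp add: \<psi>_def min_def max_def)
      then show ?thesis using False by simp
    qed
    have "(\<lambda>n. p n s - (if s > t then 1 else 0)) \<longlonglongrightarrow> 0"
    proof (rule Lim_null_comparison)
      show "eventually (\<lambda>n. norm (p n s - (if s > t then 1 else 0)) \<le> 1 / (real n + 1)) sequentially"
        using ev
      proof eventually_elim
        case (elim n)
        then show ?case using p(2)[OF s, of n] by simp
      qed
      show "(\<lambda>n. 1 / (real n + 1)) \<longlonglongrightarrow> 0"
        using LIMSEQ_inverse_real_of_nat by (simp add: inverse_eq_divide add.commute)
    qed
    then show ?thesis using Lim_null by (simp add: LIM_zero_iff)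
  qed
  show ?thesis using p(1) bnd lim by blast
qed

lemma arc_int_zero:
  fixes f :: "real^'d::finite \<Rightarrow> complex" and c t :: "real^'d"
  assumes f: "integrable torus_measure f" and four: "\<And>k. fourier f k = 0"
  shows "(LINT x|torus_measure. f x * (\<Prod>i\<in>UNIV. if cos (x $ i - c $ i) > t $ i then 1 else 0)) = 0"
proof -
  have "\<forall>i. \<exists>p :: nat \<Rightarrow> real \<Rightarrow> real. (\<forall>n. real_polynomial_function (p n)) \<and>
    (\<forall>n. \<forall>s\<in>{-1..1}. \<bar>p n s\<bar> \<le> 2) \<and>
    (\<forall>s\<in>{-1..1}. (\<lambda>n. p n s) \<longlonglongrightarrow> (if s > t $ i then 1 else 0))"
    using poly_approx by blast
  then obtain P where P: "\<And>i n. real_polynomial_function (P i n)"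
    "\<And>i n s. s \<in> {-1..1} \<Longrightarrow> \<bar>P i n s\<bar> \<le> 2"
    "\<And>i s. s \<in> {-1..1} \<Longrightarrow> (\<lambda>n. P i n s) \<longlonglongrightarrow> (if s > t $ i then 1 else 0)"
    by metis
  have cosr: "cos y \<in> {-1..1}" for y :: real using cos_ge_minus_one[of y] cos_le_one[of y] by simp
  define \<phi> where "\<phi> n x = (\<Prod>i\<in>UNIV. complex_of_real (P i n (cos (x $ i - c $ i))))" for n x
  define g where "g x = (\<Prod>i\<in>UNIV. if cos (x $ i - c $ i) > t $ i then 1 else (0::complex))" for x
  have tp: "\<phi> n \<in> trigp" for n
    unfolding \<phi>_def by (intro tp_prod tp_poly_cos P(1)) auto
  have zero: "(LINT x|torus_measure. f x * \<phi> n x) = 0" for n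
    by (rule tp_int_zero[OF f four tp])
  have [measurable]: "f \<in> borel_measurable torus_measure" using f by auto
  have cm[measurable]: "(\<lambda>x. cos (x $ i - c $ i)) \<in> borel_measurable torus_measure" for i
    by (rule cont_meas) (intro continuous_intros)
  have gmeas[measurable]: "g \<in> borel_measurable torus_measure"
    unfolding g_def by measurable
  have phimeas[measurable]: "\<phi> n \<in> borel_measurable torus_measure" for n
    by (rule cont_meas[OF tp_cont[OF tp]])
  have "(\<lambda>n. LINT x|torus_measure. f x * \<phi> n x) \<longlonglongrightarrow> (LINT x|torus_measure. f x * g x)"
  proof (rule integral_dominated_convergence[where w="\<lambda>x. 2 ^ CARD('d) * norm (f x)"])
    show "(\<lambda>x. f x * g x) \<in> borel_measurable torus_measure" by measurable
    show "(\<lambda>x. f x * \<phi> n x) \<in> borel_measurable torus_measure" for n by measurable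
    show "integrable torus_measure (\<lambda>x. 2 ^ CARD('d) * norm (f x))" using f by auto
    show "AE x in torus_measure. (\<lambda>n. f x * \<phi> n x) \<longlonglongrightarrow> f x * g x"
    proof (intro AE_I2)
      fix x
      have "(\<lambda>n. \<phi> n x) \<longlonglongrightarrow> g x"
        unfolding \<phi>_def g_def
      proof (intro tendsto_prod)
        fix i
        have "(\<lambda>n. complex_of_real (P i n (cos (x $ i - c $ i)))) \<longlonglongrightarrow>
               complex_of_real (if cos (x $ i - c $ i) > t $ i then 1 else 0)"
          by (intro tendsto_of_real P(3) cosr)
        then show "(\<lambda>n. complex_of_real (P i n (cos (x $ i - c $ i)))) \<longlonglongrightarrow>
               (if cos (x $ i - c $ i) > t $ i then 1 else 0)" by (cases "cos (x $ i - c $ i) > t $ i") simp_all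
      qed
      then show "(\<lambda>n. f x * \<phi> n x) \<longlonglongrightarrow> f x * g x" by (intro tendsto_intros)
    qed
    show "AE x in torus_measure. norm (f x * \<phi> n x) \<le> 2 ^ CARD('d) * norm (f x)" for n
    proof (intro AE_I2)
      fix x
      have "norm (\<phi> n x) \<le> (\<Prod>i\<in>(UNIV::'d set). 2)"
        unfolding \<phi>_def prod_norm[symmetric] by (intro prod_mono) (auto simp: P(2)[OF cosr])
      then show "norm (f x * \<phi> n x) \<le> 2 ^ CARD('d) * norm (f x)"
        by (simp add: norm_mult mult.commute mult_left_mono)
    qed
  qed
  then have "(LINT x|torus_measure. f x * g x) = 0"
    using LIMSEQ_unique[OF _ tendsto_const[of 0]] by (simp add: zero)
  then show ?thesis by (simp add: g_def)
qed


lemma arc_iff: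
  fixes \<theta> a b :: real
  assumes th: "0 \<le> \<theta>" "\<theta> \<le> 2*pi" and ab: "0 \<le> a" "a < b" "b \<le> 2*pi"
  shows "(a < \<theta> \<and> \<theta> < b) \<longleftrightarrow> cos (\<theta> - (a+b)/2) > cos ((b-a)/2)"
proof -
  define c where "c = (a+b)/2"
  define w where "w = (b-a)/2"
  define y where "y = \<theta> - c"
  have w: "0 < w" "w \<le> pi" using ab by (auto simp: w_def)
  have cwb: "c + w = b" "c - w = a" by (simp_all add: c_def w_def field_simps)
  have cw: "w \<le> c" "c + w \<le> 2*pi" using ab cwb by linarith+
  have "\<bar>y\<bar> < w \<longleftrightarrow> (c - w < \<theta> \<and> \<theta> < c + w)" by (auto simp: y_def abs_less_iff)
  then have iff: "(a < \<theta> \<and> \<theta> < b) \<longleftrightarrow> \<bar>y\<bar> < w" using cwb by simp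
  consider "\<bar>y\<bar> \<le> pi" | "y > pi" | "y < -pi" by linarith
  then have "\<bar>y\<bar> < w \<longleftrightarrow> cos y > cos w"
  proof cases
    case 1
    then show ?thesis using cos_mono_less_eq[of w "\<bar>y\<bar>"] w by simp
  next
    case 2
    have "w \<le> 2*pi - y" "2*pi - y \<le> pi" using 2 th cw by (auto simp: y_def)
    then have "cos (2*pi - y) \<le> cos w" using w by (intro cos_monotone_0_pi_le) auto
    then show ?thesis using 2 w by auto
  next
    case 3
    have "w \<le> y + 2*pi" "y + 2*pi \<le> pi" using 3 th cw by (auto simp: y_def)
    then have "cos (y + 2*pi) \<le> cos w" using w by (intro cos_monotone_0_pi_le) auto
    then show ?thesis using 3 w by auto
  qed
  then show ?thesis using iff by (simp add: c_def w_def y_def)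
qed

lemma ind_meas:
  assumes "A \<in> sets borel"
  shows "(indicator A :: real^'d::finite \<Rightarrow> real) \<in> borel_measurable torus_measure"
proof -
  have "(\<lambda>x. (indicator A (id x) :: real)) \<in> borel_measurable (torus_measure :: (real^'d::finite) measure)"
    by (rule measurable_compose[OF id_borel_measurable_lebesgue_on borel_measurable_indicator[OF assms]])
  then show ?thesis by (simp add: id_def)
qed

lemma ind_f_meas:
  fixes f :: "real^'d::finite \<Rightarrow> complex"
  assumes "A \<in> sets borel" "f \<in> borel_measurable torus_measure"
  shows "(\<lambda>x. indicator A x *\<^sub>R f x) \<in> borel_measurable torus_measure"
  using ind_meas[OF assms(1)] assms(2) by measurable

lemma AE_open_cube: "AE x in torus_measure. x \<in> box (0::real^'d::finite) (\<chi> i. 2*pi)"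
proof -
  let ?u = "(\<chi> i. 2*pi) :: real^'d"
  have "emeasure lborel (cbox 0 ?u - box 0 ?u) = emeasure lborel (cbox 0 ?u) - emeasure lborel (box 0 ?u)"
    by (rule emeasure_Diff) (auto simp: box_subset_cbox emeasure_lborel_box_eq)
  also have "\<dots> = 0" by (simp add: emeasure_lborel_box_eq emeasure_lborel_cbox_eq)
  finally have "cbox 0 ?u - box 0 ?u \<in> null_sets lborel" by (auto simp: null_sets_def)
  then have "cbox 0 ?u - box 0 ?u \<in> null_sets lebesgue" by (rule null_sets_completionI)
  then have "AE x in lebesgue. x \<notin> cbox 0 ?u - box 0 ?u" by (rule AE_not_in)
  then have "AE x in lebesgue. x \<in> torus \<longrightarrow> x \<in> box 0 ?u"
    by eventually_elim (auto simp: torus_def)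
  then show ?thesis by (subst AE_restrict_space_iff) auto
qed

lemma box_int_zero:
  fixes f :: "real^'d::finite \<Rightarrow> complex" and a b :: "real^'d"
  assumes f: "integrable torus_measure f" and four: "\<And>k. fourier f k = 0"
  shows "(LINT x|torus_measure. indicator (box a b) x *\<^sub>R f x) = 0"
proof -
  define a' :: "real^'d" where "a' = (\<chi> i. max (a $ i) 0)"
  define b' :: "real^'d" where "b' = (\<chi> i. min (b $ i) (2*pi))"
  have eqQ: "indicator (box a b) x = (indicator (box a' b') x :: real)" if "x \<in> box (0::real^'d) (\<chi> i. 2*pi)" for x
  proof -
    have "x \<in> box a b \<longleftrightarrow> x \<in> box a' b'"
      using that by (auto simp: mem_box_cart a'_def b'_def)
    then show ?thesis by (simp add: indicator_def)
  qed
  have "(LINT x|torus_measure. indicator (box a b) x *\<^sub>R f x) = (LINT x|torus_measure. indicator (box a' b') x *\<^sub>R f x)"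
    by (rule integral_cong_AE) (use AE_open_cube eqQ f in \<open>auto elim!: eventually_mono intro!: ind_f_meas\<close>)
  also have "\<dots> = 0"
  proof (cases "\<exists>i. b' $ i \<le> a' $ i")
    case True
    then obtain i where i: "b' $ i \<le> a' $ i" by blast
    have "x \<notin> box a' b'" for x
    proof
      assume "x \<in> box a' b'"
      then have "a' $ i < x $ i" "x $ i < b' $ i" by (auto simp: mem_box_cart)
      then show False using i by linarith
    qed
    then have "box a' b' = {}" by blast
    then show ?thesis by simp
  next
    case False
    then have lt: "a' $ i < b' $ i" for i by (simp add: not_le)
    define c :: "real^'d" where "c = (\<chi> i. (a' $ i + b' $ i) / 2)"
    define t :: "real^'d" where "t = (\<chi> i. cos ((b' $ i - a' $ i) / 2))"
    have "indicator (box a' b') x *\<^sub>R f x = f x * (\<Prod>i\<in>UNIV. if cos (x $ i - c $ i) > t $ i then 1 else 0)"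
      if x: "x \<in> torus" for x
    proof -
      have "x \<in> box a' b' \<longleftrightarrow> (\<forall>i. cos (x $ i - c $ i) > t $ i)"
      proof -
        have "(a' $ i < x $ i \<and> x $ i < b' $ i) \<longleftrightarrow> cos (x $ i - c $ i) > t $ i" for i
        proof -
          have "0 \<le> x $ i" "x $ i \<le> 2*pi" using x by (auto simp: torus_def mem_box_cart)
          moreover have "0 \<le> a' $ i" "b' $ i \<le> 2*pi" by (auto simp: a'_def b'_def)
          ultimately show ?thesis using arc_iff[of "x $ i" "a' $ i" "b' $ i"] lt[of i]
            by (simp add: c_def t_def)
        qed
        then show ?thesis by (auto simp: mem_box_cart)
      qed
      then show ?thesis
        by (cases "x \<in> box a' b'") (auto simp: indicator_def intro: prod_zero)
    qed
    then have "(LINT x|torus_measure. indicator (box a' b') x *\<^sub>R f x) =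
               (LINT x|torus_measure. f x * (\<Prod>i\<in>UNIV. if cos (x $ i - c $ i) > t $ i then 1 else 0))"
      by (intro Bochner_Integration.integral_cong) auto
    also have "\<dots> = 0" by (rule arc_int_zero[OF f four])
    finally show ?thesis .
  qed
  finally show ?thesis .
qed


lemma ind_integrable:
  fixes f :: "real^'d::finite \<Rightarrow> complex"
  assumes f: "integrable torus_measure f" and A: "A \<in> sets borel"
  shows "integrable torus_measure (\<lambda>x. indicator A x *\<^sub>R f x)"
proof (rule Bochner_Integration.integrable_bound[OF f])
  show "(\<lambda>x. indicator A x *\<^sub>R f x) \<in> borel_measurable torus_measure"
    using f A by (intro ind_f_meas) auto
  show "AE x in torus_measure. norm (indicator A x *\<^sub>R f x) \<le> norm (f x)"
    by (intro AE_I2) (simp add: indicator_def)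
qed

lemma Int_stable_boxes: "Int_stable (range (\<lambda>(a, b). box a b :: (real^'d::finite) set))"
proof (rule Int_stableI)
  fix X Y assume "X \<in> range (\<lambda>(a, b). box a b :: (real^'d) set)" "Y \<in> range (\<lambda>(a, b). box a b :: (real^'d) set)"
  then obtain a b c d where XY: "X = box a b" "Y = box c d" by auto
  have "X \<inter> Y = box (\<chi> i. max (a $ i) (c $ i)) (\<chi> i. min (b $ i) (d $ i))"
    unfolding XY by (auto simp: mem_box_cart)
  then show "X \<inter> Y \<in> range (\<lambda>(a, b). box a b)" by auto
qed

lemma borel_int_zero:
  fixes f :: "real^'d::finite \<Rightarrow> complex"
  assumes f: "integrable torus_measure f" and four: "\<And>k. fourier f k = 0"
  assumes A: "A \<in> sets borel"
  shows "(LINT x|torus_measure. indicator A x *\<^sub>R f x) = 0"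
proof -
  let ?G = "range (\<lambda>(a, b). box a b :: (real^'d) set)"
  have sb: "sets borel = sigma_sets UNIV ?G"
    by (subst borel_eq_box) (rule sets_measure_of, auto)
  have A': "A \<in> sigma_sets UNIV ?G" using A sb by simp
  have intf: "(LINT x|torus_measure. f x) = 0"
    using four[of 0] by (simp add: fourier_ek)
  have GP: "?G \<subseteq> Pow UNIV" by simp
  show ?thesis using Int_stable_boxes GP A'
  proof (induction rule: sigma_sets_induct_disjoint)
    case (basic A)
    then obtain a b where "A = box a b" by auto
    then show ?case using box_int_zero[OF f four] by simp
  next
    case empty then show ?case by simp
  next
    case (compl A)
    have Ab: "A \<in> sets borel" using compl(1) sb by simp
    have "(LINT x|torus_measure. indicator (UNIV - A) x *\<^sub>R f x) = (LINT x|torus_measure. f x - indicator A x *\<^sub>R f x)"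
      by (intro Bochner_Integration.integral_cong) (auto simp: indicator_def)
    also have "\<dots> = (LINT x|torus_measure. f x) - (LINT x|torus_measure. indicator A x *\<^sub>R f x)"
      by (rule Bochner_Integration.integral_diff[OF f ind_integrable[OF f Ab]])
    finally show ?case using compl(2) intf by simp
  next
    case (union A)
    have Ab: "A i \<in> sets borel" for i using union(2) sb by auto
    have Ub: "(\<Union>i<k. A i) \<in> sets borel" for k using Ab by auto
    have Ub': "(\<Union>i. A i) \<in> sets borel" using Ab by auto
    have fin: "(LINT x|torus_measure. indicator (\<Union>i<k. A i) x *\<^sub>R f x) = 0" for k
    proof -
      have "(LINT x|torus_measure. indicator (\<Union>i<k. A i) x *\<^sub>R f x) =
            (LINT x|torus_measure. (\<Sum>i<k. indicator (A i) x *\<^sub>R f x))"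
      proof (intro Bochner_Integration.integral_cong refl)
        fix x
        have "indicator (\<Union>i<k. A i) x = (\<Sum>i<k. indicator (A i) x :: real)"
          using indicator_UN_disjoint[of "{..<k}" A x] disjoint_family_on_mono[OF _ union(1)] by auto
        then show "indicator (\<Union>i<k. A i) x *\<^sub>R f x = (\<Sum>i<k. indicator (A i) x *\<^sub>R f x)"
          by (simp add: scaleR_sum_left)
      qed
      also have "\<dots> = (\<Sum>i<k. LINT x|torus_measure. indicator (A i) x *\<^sub>R f x)"
        by (rule Bochner_Integration.integral_sum) (rule ind_integrable[OF f Ab])
      also have "\<dots> = 0" using union(3) by simp
      finally show ?thesis .
    qed
    have "(\<lambda>k. LINT x|torus_measure. indicator (\<Union>i<k. A i) x *\<^sub>R f x) \<longlonglongrightarrow>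
          (LINT x|torus_measure. indicator (\<Union>i. A i) x *\<^sub>R f x)"
    proof (rule integral_dominated_convergence[where w="\<lambda>x. norm (f x)"])
      show "(\<lambda>x. indicator (\<Union>i. A i) x *\<^sub>R f x) \<in> borel_measurable torus_measure"
        using f Ub' by (intro ind_f_meas) auto
      show "(\<lambda>x. indicator (\<Union>i<k. A i) x *\<^sub>R f x) \<in> borel_measurable torus_measure" for k
        using f Ub by (intro ind_f_meas) auto
      show "integrable torus_measure (\<lambda>x. norm (f x))" using f by auto
      show "AE x in torus_measure. (\<lambda>k. indicator (\<Union>i<k. A i) x *\<^sub>R f x) \<longlonglongrightarrow> indicator (\<Union>i. A i) x *\<^sub>R f x"
        by (intro AE_I2 tendsto_scaleR LIMSEQ_indicator_UN tendsto_const)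
      show "AE x in torus_measure. norm (indicator (\<Union>i<k. A i) x *\<^sub>R f x) \<le> norm (f x)" for k
        by (intro AE_I2) (simp add: indicator_def)
    qed
    then show ?case using LIMSEQ_unique[OF _ tendsto_const[of 0]] fin by simp
  qed
qed

lemma sets_int_zero:
  fixes f :: "real^'d::finite \<Rightarrow> complex"
  assumes f: "integrable torus_measure f" and four: "\<And>k. fourier f k = 0"
  assumes S: "S \<in> sets torus_measure"
  shows "(LINT x|torus_measure. indicator S x *\<^sub>R f x) = 0"
proof -
  obtain L where L: "L \<in> sets lebesgue" "S = torus \<inter> L"
    using S by (auto simp: sets_restrict_space)
  obtain B N N' where BN: "L = B \<union> N" "N \<subseteq> N'" "N' \<in> null_sets lborel" "B \<in> sets lborel"
    using sets_completionE[OF L(1)] by metis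
  have "N' \<in> null_sets lebesgue" using BN(3) by (rule null_sets_completionI)
  then have "AE x in lebesgue. x \<notin> N'" by (rule AE_not_in)
  then have ae: "AE x in torus_measure. x \<notin> N'"
    by (subst AE_restrict_space_iff) (auto elim: eventually_mono)
  have Bb: "B \<in> sets borel" using BN(4) by simp
  have "(LINT x|torus_measure. indicator S x *\<^sub>R f x) = (LINT x|torus_measure. indicator B x *\<^sub>R f x)"
  proof (rule integral_cong_AE)
    have [measurable]: "f \<in> borel_measurable torus_measure" using f by auto
    show "(\<lambda>x. indicator S x *\<^sub>R f x) \<in> borel_measurable torus_measure"
      using S by measurable
    show "(\<lambda>x. indicator B x *\<^sub>R f x) \<in> borel_measurable torus_measure"
      using f Bb by (intro ind_f_meas) auto
    show "AE x in torus_measure. indicator S x *\<^sub>R f x = indicator B x *\<^sub>R f x"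
      using ae
    proof (rule eventually_mono[OF eventually_conj[OF _ AE_space]])
      fix x assume "x \<notin> N' \<and> x \<in> space torus_measure"
      then have "x \<in> torus" "x \<notin> N" using BN(2) by auto
      then have "x \<in> S \<longleftrightarrow> x \<in> B" using L(2) BN(1) by auto
      then show "indicator S x *\<^sub>R f x = indicator B x *\<^sub>R f x" by (simp add: indicator_def)
    qed
  qed
  also have "\<dots> = 0" by (rule borel_int_zero[OF f four Bb])
  finally show ?thesis .
qed

theorem fourier_zero_AE:
  fixes f :: "real^'d::finite \<Rightarrow> complex"
  assumes f: "integrable torus_measure f" and four: "\<And>k. fourier f k = 0"
  shows "AE x in torus_measure. f x = 0"
proof -
  interpret finite_measure "torus_measure :: (real^'d) measure" by (rule finite_torus)
  show ?thesis
    by (rule density_zero[OF f]) (simp add: set_lebesgue_integral_def sets_int_zero[OF f four])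
qed


lemma fourier_add: "L2 u \<Longrightarrow> L2 w \<Longrightarrow> fourier (\<lambda>x. u x + w x) k = fourier u k + fourier w k"
  by (simp add: fourier_ip ip_add_left L2_ek)

lemma fourier_diff: "L2 u \<Longrightarrow> L2 w \<Longrightarrow> fourier (\<lambda>x. u x - w x) k = fourier u k - fourier w k"
  by (simp add: fourier_ip ip_diff_left L2_ek)

lemma L2_eq_AE:
  assumes u: "L2 u" and w: "L2 w" and eq: "\<And>k. fourier u k = fourier w k"
  shows "AE x in torus_measure. u x = w x"
proof -
  have "AE x in torus_measure. u x - w x = 0"
    by (rule fourier_zero_AE[OF L2_integrable[OF L2_diff[OF u w]]]) (simp add: fourier_diff[OF u w] eq)
  then show ?thesis by auto
qed

lemma L2norm2_AE_cong:
  assumes u: "L2 u" and w: "L2 w" and ae: "AE x in torus_measure. u x = w x"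
  shows "L2norm2 u = L2norm2 w"
  unfolding L2norm2_def
  by (rule integral_cong_AE) (use u w ae in \<open>auto simp: L2_def elim: eventually_mono\<close>)

lemma parseval:
  fixes u :: "real^'d::finite \<Rightarrow> complex"
  assumes u: "L2 u"
  shows "L2norm2 u = infsum (\<lambda>k. (cmod (fourier u k))\<^sup>2) UNIV / tvol TYPE('d)"
proof -
  obtain w where w: "L2 w" "\<And>k. fourier w k = fourier u k"
      "L2norm2 w = infsum (\<lambda>k. (cmod (fourier u k))\<^sup>2) UNIV / tvol TYPE('d)"
    using RF[OF fourier_sq_summable[OF u]] by blast
  have "AE x in torus_measure. u x = w x" by (rule L2_eq_AE[OF u w(1)]) (simp add: w(2))
  then have "L2norm2 u = L2norm2 w" by (rule L2norm2_AE_cong[OF u w(1)])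
  then show ?thesis using w(3) by simp
qed

lemma ex_coeff:
  fixes c :: "int^'d::finite \<Rightarrow> complex"
  assumes "(\<lambda>k. (cmod (c k))\<^sup>2) summable_on UNIV"
  shows "\<exists>w. L2 w \<and> (\<forall>k. fourier w k = c k)"
  using RF[OF assms] by blast

lemma norm_lat_ge1: "k \<noteq> 0 \<Longrightarrow> norm (lat k) \<ge> 1"
proof -
  assume "k \<noteq> 0"
  then obtain i where i: "k $ i \<noteq> 0" by (auto simp: vec_eq_iff)
  then have "1 \<le> \<bar>real_of_int (k $ i)\<bar>" by linarith
  also have "\<bar>real_of_int (k $ i)\<bar> = \<bar>lat k $ i\<bar>" by (simp add: lat_def)
  also have "\<dots> \<le> norm (lat k)" by (rule component_le_norm_cart)
  finally show ?thesis .
qed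

lemma powr_sq: "x > 0 \<Longrightarrow> (x powr a)\<^sup>2 = x powr (2 * a)"
  for x a :: real
  by (simp add: power2_eq_square powr_add[symmetric])

definition Acoef :: "real \<Rightarrow> int^'d::finite \<Rightarrow> real" where
  "Acoef s1 k = (lap_mult (s1/2) k)\<^sup>2"

definition Bcoef :: "real \<Rightarrow> int^'d::finite \<Rightarrow> real" where
  "Bcoef s2 k = (if k = 0 then 0 else norm (lat k) powr (2 * s2))"

lemma Acoef_nz: "k \<noteq> 0 \<Longrightarrow> Acoef s1 k = norm (lat k) powr (2 * s1)"
  using norm_lat_ge1[of k] by (simp add: Acoef_def lap_mult_def powr_sq)

lemma summable_zero_ext:
  fixes f :: "int^'d::finite \<Rightarrow> real"
  assumes "f summable_on (UNIV - {0})" "f 0 = 0"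
  shows "f summable_on UNIV"
  using assms by (subst summable_on_cong_neutral[where T="UNIV - {0}" and g=f]) auto

lemma H0_L2: "u \<in> H0 s \<Longrightarrow> L2 u"
  by (simp add: H0_def L2_0_def)

lemma H0_f0: "u \<in> H0 s \<Longrightarrow> fourier u 0 = 0"
  by (simp add: H0_def L2_0_def)

lemma H0_summable:
  "u \<in> H0 s \<Longrightarrow> (\<lambda>k. norm (lat k) powr (2 * s) * (cmod (fourier u k))\<^sup>2) summable_on (UNIV - {0})"
  by (simp add: H0_def)

lemma frac_lap_prop:
  fixes u :: "real^'d::finite \<Rightarrow> complex"
  assumes u: "u \<in> H0 s1"
  shows "L2 (frac_lap (s1/2) u) \<and> (\<forall>k. fourier (frac_lap (s1/2) u) k = of_real (lap_mult (s1/2) k) * fourier u k)"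
proof -
  have "(\<lambda>k. (cmod (of_real (lap_mult (s1/2) k) * fourier u k))\<^sup>2) summable_on UNIV"
  proof (rule summable_zero_ext)
    have "(\<lambda>k. norm (lat k) powr (2 * s1) * (cmod (fourier u k))\<^sup>2) summable_on (UNIV - {0})"
      using H0_summable[OF u] .
    then show "(\<lambda>k. (cmod (of_real (lap_mult (s1/2) k) * fourier u k))\<^sup>2) summable_on (UNIV - {0})"
      by (rule summable_on_cong[THEN iffD1, rotated])
         (auto simp: norm_mult power_mult_distrib Acoef_nz[unfolded Acoef_def])
    show "(cmod (of_real (lap_mult (s1/2) 0) * fourier u 0))\<^sup>2 = 0" by (simp add: H0_f0[OF u])
  qed
  note sm = this
  show ?thesis using someI_ex[OF ex_coeff[OF sm]] unfolding frac_lap_def by simp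
qed

lemma riesz_prop:
  fixes v :: "real^'d::finite \<Rightarrow> complex"
  assumes v: "v \<in> H0 s2"
  shows "L2 (riesz (s2/2) v) \<and> (\<forall>k. fourier (riesz (s2/2) v) k =
       (if k = 0 then 0 else of_real (norm (lat k) powr (2 * (s2/2))) * fourier v k))"
proof -
  have "(\<lambda>k. (cmod (if k = 0 then 0 else of_real (norm (lat k) powr (2 * (s2/2))) * fourier v k))\<^sup>2) summable_on UNIV"
  proof (rule summable_zero_ext)
    have "(\<lambda>k. norm (lat k) powr (2 * s2) * (cmod (fourier v k))\<^sup>2) summable_on (UNIV - {0})"
      using H0_summable[OF v] .
    then show "(\<lambda>k. (cmod (if k = 0 then 0 else of_real (norm (lat k) powr (2 * (s2/2))) * fourier v k))\<^sup>2) summable_on (UNIV - {0})"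
      by (rule summable_on_cong[THEN iffD1, rotated])
         (auto simp: norm_mult power_mult_distrib powr_sq norm_lat_ge1 less_le_trans[OF zero_less_one])
  qed simp
  note sm = this
  show ?thesis using someI_ex[OF ex_coeff[OF sm]] unfolding riesz_def by simp
qed


definition ecoef :: "real \<Rightarrow> real \<Rightarrow> real \<Rightarrow> real \<Rightarrow> complex \<Rightarrow> int^'d::finite \<Rightarrow> complex \<Rightarrow> complex \<Rightarrow> real" where
  "ecoef s1 s2 \<alpha> \<beta> \<gamma> k a b = Acoef s1 k * (cmod a)\<^sup>2 + \<alpha> * (cmod (a + b - \<gamma>))\<^sup>2 + \<beta> * Bcoef s2 k * (cmod b)\<^sup>2"

lemma energy_formula:
  fixes g u v :: "real^'d::finite \<Rightarrow> complex"
  assumes g: "L2 g" and u: "u \<in> H0 s1" and v: "v \<in> H0 s2"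
  shows "energy s1 s2 \<alpha> \<beta> g u v =
     infsum (\<lambda>k. ecoef s1 s2 \<alpha> \<beta> (fourier g k) k (fourier u k) (fourier v k)) UNIV / (2 * tvol TYPE('d))"
proof -
  define V where "V = tvol TYPE('d)"
  have V: "V > 0" by (simp add: V_def tvol_pos)
  have uL: "L2 u" and vL: "L2 v" using u v by (auto intro: H0_L2)
  define fa where "fa k = Acoef s1 k * (cmod (fourier u k))\<^sup>2" for k
  define fb where "fb k = (cmod (fourier u k + fourier v k - fourier g k))\<^sup>2" for k
  define fc where "fc k = Bcoef s2 k * (cmod (fourier v k))\<^sup>2" for k
  note F = frac_lap_prop[OF u]
  note R = riesz_prop[OF v]
  have w: "L2 (\<lambda>x. u x + v x - g x)" by (intro L2_diff L2_add uL vL g)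
  have fw: "fourier (\<lambda>x. u x + v x - g x) k = fourier u k + fourier v k - fourier g k" for k
    by (simp add: fourier_diff[OF L2_add[OF uL vL] g] fourier_add[OF uL vL])
  have eqa: "(cmod (fourier (frac_lap (s1/2) u) k))\<^sup>2 = fa k" for k
    using F by (simp add: fa_def Acoef_def norm_mult power_mult_distrib)
  have eqb: "(cmod (fourier (\<lambda>x. u x + v x - g x) k))\<^sup>2 = fb k" for k
    by (simp add: fb_def fw)
  have eqc: "(cmod (fourier (riesz (s2/2) v) k))\<^sup>2 = fc k" for k
    using R norm_lat_ge1[of k]
    by (cases "k = 0") (auto simp: fc_def Bcoef_def norm_mult power_mult_distrib powr_sq less_le_trans[OF zero_less_one])
  have sa: "fa summable_on UNIV" using fourier_sq_summable[OF conjunct1[OF F]] eqa by simp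
  have sb: "fb summable_on UNIV" using fourier_sq_summable[OF w] eqb by simp
  have sc: "fc summable_on UNIV" using fourier_sq_summable[OF conjunct1[OF R]] eqc by simp
  have Na: "L2norm2 (frac_lap (s1/2) u) = infsum fa UNIV / V"
    using parseval[OF conjunct1[OF F]] eqa by (simp add: V_def)
  have Nb: "L2norm2 (\<lambda>x. u x + v x - g x) = infsum fb UNIV / V"
    using parseval[OF w] eqb by (simp add: V_def)
  have Nc: "L2norm2 (riesz (s2/2) v) = infsum fc UNIV / V"
    using parseval[OF conjunct1[OF R]] eqc by (simp add: V_def)
  have "infsum (\<lambda>k. ecoef s1 s2 \<alpha> \<beta> (fourier g k) k (fourier u k) (fourier v k)) UNIV
        = infsum (\<lambda>k. fa k + \<alpha> * fb k + \<beta> * fc k) UNIV"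
    by (intro infsum_cong) (simp add: ecoef_def fa_def fb_def fc_def mult.assoc)
  also have "\<dots> = infsum fa UNIV + \<alpha> * infsum fb UNIV + \<beta> * infsum fc UNIV"
    using sa sb sc
    by (simp add: infsum_add summable_on_add summable_on_cmult_right infsum_cmult_right)
  finally have "infsum (\<lambda>k. ecoef s1 s2 \<alpha> \<beta> (fourier g k) k (fourier u k) (fourier v k)) UNIV
        = infsum fa UNIV + \<alpha> * infsum fb UNIV + \<beta> * infsum fc UNIV" .
  then show ?thesis
    unfolding energy_def Na Nb Nc V_def[symmetric] using V
    by (simp add: field_simps)
qed

lemma ecoef_summable:
  fixes g u v :: "real^'d::finite \<Rightarrow> complex"
  assumes g: "L2 g" and u: "u \<in> H0 s1" and v: "v \<in> H0 s2"
  shows "(\<lambda>k. ecoef s1 s2 \<alpha> \<beta> (fourier g k) k (fourier u k) (fourier v k)) summable_on UNIV"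
proof -
  have uL: "L2 u" and vL: "L2 v" using u v by (auto intro: H0_L2)
  define fa where "fa k = Acoef s1 k * (cmod (fourier u k))\<^sup>2" for k
  define fb where "fb k = (cmod (fourier u k + fourier v k - fourier g k))\<^sup>2" for k
  define fc where "fc k = Bcoef s2 k * (cmod (fourier v k))\<^sup>2" for k
  note F = frac_lap_prop[OF u]
  note R = riesz_prop[OF v]
  have w: "L2 (\<lambda>x. u x + v x - g x)" by (intro L2_diff L2_add uL vL g)
  have fw: "fourier (\<lambda>x. u x + v x - g x) k = fourier u k + fourier v k - fourier g k" for k
    by (simp add: fourier_diff[OF L2_add[OF uL vL] g] fourier_add[OF uL vL])
  have eqa: "(cmod (fourier (frac_lap (s1/2) u) k))\<^sup>2 = fa k" for k
    using F by (simp add: fa_def Acoef_def norm_mult power_mult_distrib)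
  have eqb: "(cmod (fourier (\<lambda>x. u x + v x - g x) k))\<^sup>2 = fb k" for k
    by (simp add: fb_def fw)
  have eqc: "(cmod (fourier (riesz (s2/2) v) k))\<^sup>2 = fc k" for k
    using R norm_lat_ge1[of k]
    by (cases "k = 0") (auto simp: fc_def Bcoef_def norm_mult power_mult_distrib powr_sq less_le_trans[OF zero_less_one])
  have sa: "fa summable_on UNIV" using fourier_sq_summable[OF conjunct1[OF F]] eqa by simp
  have sb: "fb summable_on UNIV" using fourier_sq_summable[OF w] eqb by simp
  have sc: "fc summable_on UNIV" using fourier_sq_summable[OF conjunct1[OF R]] eqc by simp
  have "(\<lambda>k. fa k + \<alpha> * fb k + \<beta> * fc k) summable_on UNIV"
    using sa sb sc by (intro summable_on_add summable_on_cmult_right)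
  then show ?thesis
    by (rule summable_on_cong[THEN iffD1, rotated]) (simp add: ecoef_def fa_def fb_def fc_def mult.assoc)
qed


lemma quad_real:
  fixes A B \<alpha> g x' y' D :: real
  assumes D: "D = A*B + \<alpha>*A + \<alpha>*B" "D \<noteq> 0"
  shows "A*x'\<^sup>2 + \<alpha>*(x'+y'-g)\<^sup>2 + B*y'\<^sup>2 =
     (A*(\<alpha>*B*g/D)\<^sup>2 + \<alpha>*(\<alpha>*B*g/D + \<alpha>*A*g/D - g)\<^sup>2 + B*(\<alpha>*A*g/D)\<^sup>2)
     + (A*(x' - \<alpha>*B*g/D)\<^sup>2 + \<alpha>*((x' - \<alpha>*B*g/D) + (y' - \<alpha>*A*g/D))\<^sup>2 + B*(y' - \<alpha>*A*g/D)\<^sup>2)"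
proof -
  define x where "x = \<alpha>*B*g/D"
  define y where "y = \<alpha>*A*g/D"
  have "A*x + \<alpha>*(x+y-g) = (\<alpha>*g/D) * (A*B + \<alpha>*A + \<alpha>*B) - \<alpha>*g"
    using D(2) unfolding x_def y_def by (simp add: field_simps)
  also have "\<dots> = 0" using D(2) by (simp add: D(1)[symmetric])
  finally have o1: "A*x + \<alpha>*(x+y-g) = 0" .
  have "B*y + \<alpha>*(x+y-g) = (\<alpha>*g/D) * (A*B + \<alpha>*A + \<alpha>*B) - \<alpha>*g"
    using D(2) unfolding x_def y_def by (simp add: field_simps)
  also have "\<dots> = 0" using D(2) by (simp add: D(1)[symmetric])
  finally have o2: "B*y + \<alpha>*(x+y-g) = 0" .
  have "A*x'\<^sup>2 + \<alpha>*(x'+y'-g)\<^sup>2 + B*y'\<^sup>2 -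
     ((A*x\<^sup>2 + \<alpha>*(x+y-g)\<^sup>2 + B*y\<^sup>2) + (A*(x' - x)\<^sup>2 + \<alpha>*((x' - x) + (y' - y))\<^sup>2 + B*(y' - y)\<^sup>2))
     = 2*(x'-x)*(A*x + \<alpha>*(x+y-g)) + 2*(y'-y)*(B*y + \<alpha>*(x+y-g))"
    by (simp add: algebra_simps power2_eq_square)
  then show ?thesis using o1 o2 by (simp add: x_def y_def)
qed

lemma quad_complex:
  fixes A B \<alpha> D :: real and z w \<gamma> :: complex
  assumes D: "D = A*B + \<alpha>*A + \<alpha>*B" "D \<noteq> 0"
  defines "a \<equiv> complex_of_real (\<alpha>*B/D) * \<gamma>" and "b \<equiv> complex_of_real (\<alpha>*A/D) * \<gamma>"
  shows "A*(cmod z)\<^sup>2 + \<alpha>*(cmod (z+w-\<gamma>))\<^sup>2 + B*(cmod w)\<^sup>2 =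
     (A*(cmod a)\<^sup>2 + \<alpha>*(cmod (a+b-\<gamma>))\<^sup>2 + B*(cmod b)\<^sup>2)
     + (A*(cmod (z-a))\<^sup>2 + \<alpha>*(cmod ((z-a)+(w-b)))\<^sup>2 + B*(cmod (w-b))\<^sup>2)"
proof -
  have Re: "Re a = \<alpha>*B*Re \<gamma>/D" "Re b = \<alpha>*A*Re \<gamma>/D" by (simp_all add: a_def b_def)
  have Im: "Im a = \<alpha>*B*Im \<gamma>/D" "Im b = \<alpha>*A*Im \<gamma>/D" by (simp_all add: a_def b_def)
  note qr = quad_real[OF D, of "Re z" "Re w" "Re \<gamma>"] quad_real[OF D, of "Im z" "Im w" "Im \<gamma>"]
  show ?thesis
    unfolding cmod_power2 using qr by (simp add: Re Im algebra_simps)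
qed


lemma coef_bounds:
  fixes A B \<alpha> :: real
  assumes A: "A > 0" and B: "B > 0" and al: "\<alpha> > 0"
  defines "D \<equiv> A*B + \<alpha>*A + \<alpha>*B"
  shows "D > 0" "0 \<le> \<alpha>*B/D" "\<alpha>*B/D \<le> 1" "0 \<le> \<alpha>*A/D" "\<alpha>*A/D \<le> 1"
    "A * (\<alpha>*B/D)\<^sup>2 \<le> \<alpha>"
proof -
  show D: "D > 0" using A B al by (simp add: D_def add_pos_pos)
  show "0 \<le> \<alpha>*B/D" "0 \<le> \<alpha>*A/D" using A B al D by simp_all
  have "\<alpha>*B \<le> D" "\<alpha>*A \<le> D" using A B al by (simp_all add: D_def)
  then show "\<alpha>*B/D \<le> 1" "\<alpha>*A/D \<le> 1" using D by simp_all
  have "A*\<alpha> \<le> (A+\<alpha>)\<^sup>2"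
  proof -
    have "0 \<le> A*A" "0 \<le> A*\<alpha>" "0 \<le> \<alpha>*\<alpha>" using A al by simp_all
    then show ?thesis by (simp add: power2_eq_square algebra_simps)
  qed
  then have "B\<^sup>2 * (A*\<alpha>) \<le> B\<^sup>2 * (A+\<alpha>)\<^sup>2" by (intro mult_left_mono) simp_all
  also have "\<dots> = (B*(A+\<alpha>))\<^sup>2" by (simp add: power_mult_distrib)
  also have "\<dots> \<le> D\<^sup>2" using A B al by (intro power_mono) (simp_all add: D_def algebra_simps)
  finally have *: "B\<^sup>2 * (A*\<alpha>) \<le> D\<^sup>2" .
  have "A * (\<alpha>*B/D)\<^sup>2 = \<alpha> * ((B\<^sup>2 * (A*\<alpha>)) / D\<^sup>2)" by (simp add: power_divide power_mult_distrib power2_eq_square)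
  also have "\<dots> \<le> \<alpha> * 1" using * D al by (intro mult_left_mono) simp_all
  finally show "A * (\<alpha>*B/D)\<^sup>2 \<le> \<alpha>" by simp
qed

lemma cmod_scale_sq: "(cmod (complex_of_real r * z))\<^sup>2 = r\<^sup>2 * (cmod z)\<^sup>2"
  by (simp add: norm_mult power_mult_distrib)

lemma fourier_const_int: "fourier u 0 = tint u"
  by (simp add: fourier_ek tint_def)

theorem theorem7:
  fixes g :: "real^'d \<Rightarrow> complex" and s1 s2 \<alpha> \<beta> :: real
  assumes "s1 \<ge> 0" and "s2 \<le> 0" and "\<alpha> > 0" and "\<beta> > 0" and "L2 g"
  shows "\<exists>ut v. ut \<in> H0 s1 \<and> v \<in> H0 s2 \<and>
     (\<forall>u' v'. u' \<in> H0 s1 \<and> v' \<in> H0 s2 \<longrightarrow>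
         energy s1 s2 \<alpha> \<beta> g ut v \<le> energy s1 s2 \<alpha> \<beta> g u' v') \<and>
     tint (\<lambda>x. (ut x + tint g / of_real (tvol TYPE('d))) - g x) = 0 \<and>
     tint v = 0 \<and>
     (\<forall>u' v'. u' \<in> H0 s1 \<and> v' \<in> H0 s2 \<and>
         (\<forall>u'' v''. u'' \<in> H0 s1 \<and> v'' \<in> H0 s2 \<longrightarrow>
            energy s1 s2 \<alpha> \<beta> g u' v' \<le> energy s1 s2 \<alpha> \<beta> g u'' v'') \<longrightarrow>
         (AE x in torus_measure. u' x = ut x \<and> v' x = v x))"
proof -
  note s2 = assms(2) and al = assms(3) and be = assms(4) and g = assms(5)
  define V where "V = tvol TYPE('d)"
  have V: "V > 0" by (simp add: V_def tvol_pos)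
  define \<gamma> where "\<gamma> k = fourier g k" for k
  define Ak where "Ak k = Acoef s1 k" for k :: "int^'d"
  define Bk where "Bk k = \<beta> * Bcoef s2 k" for k :: "int^'d"
  define Dk where "Dk k = Ak k * Bk k + \<alpha> * Ak k + \<alpha> * Bk k" for k
  have Apos: "Ak k > 0" if "k \<noteq> 0" for k
    using that norm_lat_ge1[of k] by (simp add: Ak_def Acoef_nz)
  have Bpos: "Bk k > 0" if "k \<noteq> 0" for k
    using that norm_lat_ge1[of k] be by (simp add: Bk_def Bcoef_def)
  have cbk: "Dk k > 0 \<and> 0 \<le> \<alpha> * Bk k / Dk k \<and> \<alpha> * Bk k / Dk k \<le> 1 \<and>
      0 \<le> \<alpha> * Ak k / Dk k \<and> \<alpha> * Ak k / Dk k \<le> 1 \<and> Ak k * (\<alpha> * Bk k / Dk k)\<^sup>2 \<le> \<alpha>"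
    if "k \<noteq> 0" for k
    using coef_bounds[OF Apos[OF that] Bpos[OF that] al] unfolding Dk_def by simp
  define ca where "ca k = (if k = 0 then 0 else complex_of_real (\<alpha> * Bk k / Dk k) * \<gamma> k)" for k
  define cb where "cb k = (if k = 0 then 0 else complex_of_real (\<alpha> * Ak k / Dk k) * \<gamma> k)" for k
  have sg: "(\<lambda>k. (cmod (\<gamma> k))\<^sup>2) summable_on UNIV"
    unfolding \<gamma>_def by (rule fourier_sq_summable[OF g])
  have ca_le: "(cmod (ca k))\<^sup>2 \<le> (cmod (\<gamma> k))\<^sup>2" for k
  proof (cases "k = 0")
    case False
    have le1: "(\<alpha> * Bk k / Dk k)\<^sup>2 \<le> 1" using cbk[OF False] by (simp add: power_le_one)
    have "(cmod (ca k))\<^sup>2 = (\<alpha> * Bk k / Dk k)\<^sup>2 * (cmod (\<gamma> k))\<^sup>2"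
      using False by (simp only: ca_def if_False cmod_scale_sq)
    then show ?thesis using mult_right_mono[OF le1, of "(cmod (\<gamma> k))\<^sup>2"] by simp
  qed (simp add: ca_def)
  have cb_le: "(cmod (cb k))\<^sup>2 \<le> (cmod (\<gamma> k))\<^sup>2" for k
  proof (cases "k = 0")
    case False
    have le1: "(\<alpha> * Ak k / Dk k)\<^sup>2 \<le> 1" using cbk[OF False] by (simp add: power_le_one)
    have "(cmod (cb k))\<^sup>2 = (\<alpha> * Ak k / Dk k)\<^sup>2 * (cmod (\<gamma> k))\<^sup>2"
      using False by (simp only: cb_def if_False cmod_scale_sq)
    then show ?thesis using mult_right_mono[OF le1, of "(cmod (\<gamma> k))\<^sup>2"] by simp
  qed (simp add: cb_def)
  have Aca_le: "Ak k * (cmod (ca k))\<^sup>2 \<le> \<alpha> * (cmod (\<gamma> k))\<^sup>2" if "k \<noteq> 0" for k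
  proof -
    have "Ak k * (cmod (ca k))\<^sup>2 = (Ak k * (\<alpha> * Bk k / Dk k)\<^sup>2) * (cmod (\<gamma> k))\<^sup>2"
      using that by (simp only: ca_def if_False cmod_scale_sq mult.assoc)
    also have "\<dots> \<le> \<alpha> * (cmod (\<gamma> k))\<^sup>2"
      using cbk[OF that] by (intro mult_right_mono) simp_all
    finally show ?thesis .
  qed
  have sca: "(\<lambda>k. (cmod (ca k))\<^sup>2) summable_on UNIV"
    by (rule summable_on_comparison_test[OF sg]) (use ca_le in auto)
  have scb: "(\<lambda>k. (cmod (cb k))\<^sup>2) summable_on UNIV"
    by (rule summable_on_comparison_test[OF sg]) (use cb_le in auto)
  obtain ut where ut: "L2 ut" "\<And>k. fourier ut k = ca k" using ex_coeff[OF sca] by blast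
  obtain v where v: "L2 v" "\<And>k. fourier v k = cb k" using ex_coeff[OF scb] by blast
  have utH: "ut \<in> H0 s1"
    unfolding H0_def L2_0_def
  proof (intro CollectI conjI)
    show "L2 ut" "fourier ut 0 = 0" using ut by (simp_all add: ca_def)
    have "(\<lambda>k. \<alpha> * (cmod (\<gamma> k))\<^sup>2) summable_on (UNIV - {0})"
      by (rule summable_on_subset_banach[OF summable_on_cmult_right[OF sg]]) simp
    then show "(\<lambda>k. norm (lat k) powr (2 * s1) * (cmod (fourier ut k))\<^sup>2) summable_on (UNIV - {0})"
      by (rule summable_on_comparison_test)
         (use Aca_le in \<open>auto simp: ut(2) Ak_def Acoef_nz\<close>)
  qed
  have vH: "v \<in> H0 s2"
    unfolding H0_def L2_0_def
  proof (intro CollectI conjI)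
    show "L2 v" "fourier v 0 = 0" using v by (simp_all add: cb_def)
    have "(\<lambda>k. (cmod (\<gamma> k))\<^sup>2) summable_on (UNIV - {0})"
      by (rule summable_on_subset_banach[OF sg]) simp
    then show "(\<lambda>k. norm (lat k) powr (2 * s2) * (cmod (fourier v k))\<^sup>2) summable_on (UNIV - {0})"
    proof (rule summable_on_comparison_test)
      fix k :: "int^'d" assume "k \<in> UNIV - {0}"
      then have k: "k \<noteq> 0" by simp
      have "norm (lat k) powr (2 * s2) \<le> norm (lat k) powr 0"
        using s2 norm_lat_ge1[OF k] by (intro powr_mono) simp_all
      then have "norm (lat k) powr (2 * s2) \<le> 1" using k by simp
      then have "norm (lat k) powr (2 * s2) * (cmod (cb k))\<^sup>2 \<le> 1 * (cmod (cb k))\<^sup>2"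
        by (intro mult_right_mono) simp_all
      then show "norm (lat k) powr (2 * s2) * (cmod (fourier v k))\<^sup>2 \<le> (cmod (\<gamma> k))\<^sup>2"
        using cb_le[of k] unfolding v(2) by linarith
    qed simp
  qed
  define Q where "Q k p q = Ak k * (cmod p)\<^sup>2 + \<alpha> * (cmod (p + q))\<^sup>2 + Bk k * (cmod q)\<^sup>2" for k p q
  have Qnn: "Q k p q \<ge> 0" if "k \<noteq> 0" for k p q
    using Apos[OF that] Bpos[OF that] al by (simp add: Q_def)
  have ident: "ecoef s1 s2 \<alpha> \<beta> (\<gamma> k) k (fourier u' k) (fourier v' k) =
       ecoef s1 s2 \<alpha> \<beta> (\<gamma> k) k (ca k) (cb k) + Q k (fourier u' k - ca k) (fourier v' k - cb k)"
    if u': "u' \<in> H0 s1" and v': "v' \<in> H0 s2" for u' v' k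
  proof (cases "k = 0")
    case True
    then show ?thesis using H0_f0[OF u'] H0_f0[OF v'] by (simp add: ca_def cb_def Q_def)
  next
    case False
    have D: "Dk k = Ak k * Bk k + \<alpha> * Ak k + \<alpha> * Bk k" "Dk k \<noteq> 0"
      using cbk[OF False] by (simp_all add: Dk_def)
    show ?thesis
      using quad_complex[OF D, of "fourier u' k" "fourier v' k" "\<gamma> k"] False
      by (simp add: ecoef_def Q_def ca_def cb_def Ak_def Bk_def mult.assoc)
  qed
  have compare: "energy s1 s2 \<alpha> \<beta> g u' v' = energy s1 s2 \<alpha> \<beta> g ut v +
        infsum (\<lambda>k. Q k (fourier u' k - ca k) (fourier v' k - cb k)) UNIV / (2 * V)
     \<and> infsum (\<lambda>k. Q k (fourier u' k - ca k) (fourier v' k - cb k)) UNIV \<ge> 0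
     \<and> (\<lambda>k. Q k (fourier u' k - ca k) (fourier v' k - cb k)) summable_on UNIV"
    if u': "u' \<in> H0 s1" and v': "v' \<in> H0 s2" for u' v'
  proof -
    define e' where "e' k = ecoef s1 s2 \<alpha> \<beta> (\<gamma> k) k (fourier u' k) (fourier v' k)" for k
    define e where "e k = ecoef s1 s2 \<alpha> \<beta> (\<gamma> k) k (fourier ut k) (fourier v k)" for k
    define q where "q k = Q k (fourier u' k - ca k) (fourier v' k - cb k)" for k
    have se': "e' summable_on UNIV" unfolding e'_def \<gamma>_def by (rule ecoef_summable[OF g u' v'])
    have se: "e summable_on UNIV" unfolding e_def \<gamma>_def by (rule ecoef_summable[OF g utH vH])
    have eq: "e' k = e k + q k" for k
      using ident[OF u' v', of k] by (simp add: e'_def e_def q_def ut(2) v(2))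
    have sq: "q summable_on UNIV"
    proof -
      have "(\<lambda>k. e' k + (-1) * e k) summable_on UNIV"
        by (intro summable_on_add se' summable_on_cmult_right se)
      then show ?thesis by (rule summable_on_cong[THEN iffD1, rotated]) (simp add: eq)
    qed
    have qnn: "q k \<ge> 0" for k
    proof (cases "k = 0")
      case True then show ?thesis using H0_f0[OF u'] H0_f0[OF v'] by (simp add: q_def Q_def ca_def cb_def)
    next
      case False then show ?thesis by (simp add: q_def Qnn)
    qed
    have "infsum e' UNIV = infsum e UNIV + infsum q UNIV"
      unfolding eq by (rule infsum_add[OF se sq])
    moreover have "energy s1 s2 \<alpha> \<beta> g u' v' = infsum e' UNIV / (2 * V)"
      unfolding e'_def \<gamma>_def V_def by (rule energy_formula[OF g u' v'])
    moreover have "energy s1 s2 \<alpha> \<beta> g ut v = infsum e UNIV / (2 * V)"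
      unfolding e_def \<gamma>_def V_def by (rule energy_formula[OF g utH vH])
    moreover have "infsum q UNIV \<ge> 0" by (rule infsum_nonneg) (simp add: qnn)
    moreover have qeq: "q = (\<lambda>k. Q k (fourier u' k - ca k) (fourier v' k - cb k))"
      by (rule ext) (simp add: q_def)
    ultimately show ?thesis using sq by (simp add: qeq add_divide_distrib)
  qed
  have minimal: "energy s1 s2 \<alpha> \<beta> g ut v \<le> energy s1 s2 \<alpha> \<beta> g u' v'"
    if "u' \<in> H0 s1" "v' \<in> H0 s2" for u' v'
    using compare[OF that] V by simp
  have tv: "tint v = 0" using v(2)[of 0] by (simp add: fourier_const_int[symmetric] cb_def)
  have tu: "tint (\<lambda>x. (ut x + tint g / of_real (tvol TYPE('d))) - g x) = 0"
  proof -
    define c where "c = tint g / of_real V"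
    have iu: "integrable torus_measure ut" by (rule L2_integrable[OF ut(1)])
    have ig: "integrable torus_measure g" by (rule L2_integrable[OF g])
    have ic: "integrable (torus_measure :: (real^'d) measure) (\<lambda>x. c)" by simp
    have iuc: "integrable torus_measure (\<lambda>x. ut x + c)"
      by (rule Bochner_Integration.integrable_add[OF iu ic])
    have "tint (\<lambda>x. (ut x + c) - g x) = tint (\<lambda>x. ut x + c) - tint g"
      unfolding tint_def by (rule Bochner_Integration.integral_diff[OF iuc ig])
    also have "tint (\<lambda>x. ut x + c) = tint ut + (LINT x|(torus_measure :: (real^'d) measure). c)"
      unfolding tint_def by (rule Bochner_Integration.integral_add[OF iu ic])
    also have "(LINT x|(torus_measure :: (real^'d) measure). c) = measure (torus_measure :: (real^'d) measure) torus *\<^sub>R c"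
      by (simp only: lebesgue_integral_const space_torus)
    also have "measure (torus_measure :: (real^'d) measure) torus = V"
      using measure_torus[where 'd='d] by (simp add: V_def)
    also have "tint ut = 0" using ut(2)[of 0] by (simp add: fourier_const_int[symmetric] ca_def)
    also have "V *\<^sub>R c = tint g" using V by (simp add: c_def scaleR_conv_of_real)
    finally show ?thesis by (simp add: c_def V_def)
  qed
  have unique: "AE x in torus_measure. u' x = ut x \<and> v' x = v x"
    if u': "u' \<in> H0 s1" and v': "v' \<in> H0 s2"
      and min: "\<forall>u'' v''. u'' \<in> H0 s1 \<and> v'' \<in> H0 s2 \<longrightarrow>
            energy s1 s2 \<alpha> \<beta> g u' v' \<le> energy s1 s2 \<alpha> \<beta> g u'' v''" for u' v'
  proof -
    define q where "q k = Q k (fourier u' k - ca k) (fourier v' k - cb k)" for k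
    have le: "energy s1 s2 \<alpha> \<beta> g u' v' \<le> energy s1 s2 \<alpha> \<beta> g ut v" using min utH vH by blast
    note C = compare[OF u' v', folded q_def]
    have "infsum q UNIV \<le> 0" using C le V by (simp add: divide_le_0_iff)
    then have q0: "q k = 0" for k
    proof (rule nonneg_infsum_le_0D[OF _ conjunct2[OF conjunct2[OF C]]])
      fix k show "q k \<ge> 0"
      proof (cases "k = 0")
        case True then show ?thesis using H0_f0[OF u'] H0_f0[OF v'] by (simp add: q_def Q_def ca_def cb_def)
      next
        case False then show ?thesis by (simp add: q_def Qnn)
      qed
    qed simp
    have coef: "fourier u' k = fourier ut k \<and> fourier v' k = fourier v k" for k
    proof (cases "k = 0")
      case True then show ?thesis using H0_f0[OF u'] H0_f0[OF v'] H0_f0[OF utH] H0_f0[OF vH] by simp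
    next
      case False
      have A: "Ak k > 0" and B: "Bk k > 0" using Apos[OF False] Bpos[OF False] .
      have t1: "0 \<le> Ak k * (cmod (fourier u' k - ca k))\<^sup>2" using A by simp
      have t2: "0 \<le> \<alpha> * (cmod ((fourier u' k - ca k) + (fourier v' k - cb k)))\<^sup>2" using al by simp
      have t3: "0 \<le> Bk k * (cmod (fourier v' k - cb k))\<^sup>2" using B by simp
      have sum: "Ak k * (cmod (fourier u' k - ca k))\<^sup>2 + \<alpha> * (cmod ((fourier u' k - ca k) + (fourier v' k - cb k)))\<^sup>2
          + Bk k * (cmod (fourier v' k - cb k))\<^sup>2 = 0"
        using q0[of k] by (simp add: q_def Q_def)
      have "Ak k * (cmod (fourier u' k - ca k))\<^sup>2 = 0" "Bk k * (cmod (fourier v' k - cb k))\<^sup>2 = 0"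
        using sum t1 t2 t3 by linarith+
      then show ?thesis using A B by (simp add: ut(2) v(2))
    qed
    have "AE x in torus_measure. u' x = ut x"
      by (rule L2_eq_AE[OF H0_L2[OF u'] ut(1)]) (simp add: coef)
    moreover have "AE x in torus_measure. v' x = v x"
      by (rule L2_eq_AE[OF H0_L2[OF v'] v(1)]) (simp add: coef)
    ultimately show ?thesis by eventually_elim simp
  qed
  show ?thesis
    using utH vH minimal tu tv unique by blast
qed


end
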